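(* Let $w$ be any finite word in the letters $\tilde T,\tilde R$. Then $w(F_0)$, where $F_0=\sum_{j\ge0}UP[j,0]$, can be written in quiver form, i.e. there exist $m,n\ge0$, vectors $S,A\in\mathbb{Z}^{m+n}$, a symmetric matrix $Q\in\mathbb{Z}^{(m+n)\times(m+n)}$ and a type $X\in\{UP,OP,RI\}$ such that $$w(F_0)=\sum_{\mathbf d\in\mathbb{N}^{m+n}}(-q)^{S\cdot\mathbf d}a^{A\cdot\mathbf d}q^{\mathbf d^TQ\mathbf d}{|\mathbf d|\brack d_1,\dots,d_{m+n}}X[\,|\mathbf d|,\,d_1+\cdots+d_m\,].$$
   Context: Notation: $(x;q^2)_n=\prod_{i=0}^{n-1}(1-xq^{2i})$; ${N\brack b_1,\dots,b_m}=\frac{(q^2;q^2)_N}{\prod(q^2;q^2)_{b_i}}$ for $\sum b_i=N$; ${N\brack k}_+={N\brack k,N-k}$; $|\mathbf d|=d_1+\cdots+d_{m+n}$. Formal skein setup: symbols $X[j,k]$ for $X\in\{UP,OP,RI\}$ and integers $0\le k\le j$ are linearly independent; $\mathcal M$ is the set of formal sums $\sum_{j\ge0}\sum_X\sum_{k=0}^jc_{X,j,k}X[j,k]$ with coefficients in $\mathbb{Q}(a,q)$ (any expression as on the right-hand side above defines such an element by collecting terms, since for fixed $j$ there are finitely many $\mathbf d$ with $|\mathbf d|=j$). (They model the basis webs of the $j$-colored HOMFLY-PT skein module of 4-ended tangles with boundary orientation $X$.) Linear operators $T,R$ (top/right twist) are defined, for fixed $j$, by $T\,UP[j,k]=\sum_{h=k}^j(-q)^{h-j}q^{k^2}{h\brack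 k}_+UP[j,h]$; $R\,UP[j,k]=\sum_{h=0}^k(-q)^{h-j}a^{h-j}q^{-2kh+k^2+j^2}{j-h\brack k-h}_+OP[j,h]$; $T\,OP[j,k]=\sum_{h=k}^j(-q)^ha^kq^{k^2-2jk}{h\brack k}_+RI[j,h]$; $R\,OP[j,k]=\sum_{h=0}^k(-q)^{h-j}a^{k-j}q^{2h(j-k)+(k-j)^2}{j-h\brack k-h}_+UP[j,h]$; $T\,RI[j,k]=\sum_{h=k}^j(-q)^ha^hq^{k^2-2jh}{h\brack k}_+OP[j,h]$; $R\,RI[j,k]=\sum_{h=0}^k(-q)^hq^{h(2j-2k)+k^2-j^2}{j-h\brack k-h}_+RI[j,h]$, extended termwise. Rescaling $\rho(X[j,k])={j\brack k}_+X[j,k]$; rescaled twists $\tilde T=\rho T\rho^{-1}$, $\tilde R=\rho R\rho^{-1}$. The indices $d_1,\dots,d_m$ are called active and $d_{m+1},\dots,d_{m+n}$ inactive. *)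

theory Defs
  imports Main "HOL-Computational_Algebra.Polynomial" "HOL-Computational_Algebra.Fraction_Field"
begin

text \<open>The coefficient field Q(a,q): fractions of bivariate rational polynomials.
  The outer polynomial variable is a, the inner one is q.\<close>
type_synonym Qaq = "rat poly poly fract"

definition av :: Qaq where "av = Fract [:0, 1:] 1"
definition qv :: Qaq where "qv = Fract [:[:0, 1:]:] 1"

definition qpoch :: "Qaq \<Rightarrow> nat \<Rightarrow> Qaq" where
  "qpoch x n = (\<Prod>i<n. 1 - x * qv ^ (2 * i))"

definition qbin :: "nat \<Rightarrow> nat \<Rightarrow> Qaq" where
  "qbin N k = qpoch (qv ^ 2) N / (qpoch (qv ^ 2) k * qpoch (qv ^ 2) (N - k))"

datatype orient = UP | OP | RI

text \<open>Formal sums: c X j k is the coefficient of X[j,k] (meaningful for k \<le> j).\<close>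
type_synonym skein = "orient \<Rightarrow> nat \<Rightarrow> nat \<Rightarrow> Qaq"

abbreviation zi :: "nat \<Rightarrow> int" where "zi \<equiv> int"

text \<open>Top twist T, written coefficientwise on the target X[j,h].\<close>
definition Ttw :: "skein \<Rightarrow> skein" where
  "Ttw c X j h = (if h \<le> j then (case X of
      UP \<Rightarrow> (\<Sum>k\<in>{0..h}. c UP j k * (- qv) powi (zi h - zi j) * qv powi (zi k ^ 2) * qbin h k)
    | RI \<Rightarrow> (\<Sum>k\<in>{0..h}. c OP j k * (- qv) powi (zi h) * av powi (zi k)
                * qv powi (zi k ^ 2 - 2 * zi j * zi k) * qbin h k)
    | OP \<Rightarrow> (\<Sum>k\<in>{0..h}. c RI j k * (- qv) powi (zi h) * av powi (zi h)
                * qv powi (zi k ^ 2 - 2 * zi j * zi h) * qbin h k))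
    else 0)"

text \<open>Right twist R, written coefficientwise on the target X[j,h].\<close>
definition Rtw :: "skein \<Rightarrow> skein" where
  "Rtw c X j h = (if h \<le> j then (case X of
      OP \<Rightarrow> (\<Sum>k\<in>{h..j}. c UP j k * (- qv) powi (zi h - zi j) * av powi (zi h - zi j)
                * qv powi (- 2 * zi k * zi h + zi k ^ 2 + zi j ^ 2) * qbin (j - h) (k - h))
    | UP \<Rightarrow> (\<Sum>k\<in>{h..j}. c OP j k * (- qv) powi (zi h - zi j) * av powi (zi k - zi j)
                * qv powi (2 * zi h * (zi j - zi k) + (zi k - zi j) ^ 2) * qbin (j - h) (k - h))
    | RI \<Rightarrow> (\<Sum>k\<in>{h..j}. c RI j k * (- qv) powi (zi h)
                * qv powi (zi h * (2 * zi j - 2 * zi k) + zi k ^ 2 - zi j ^ 2) * qbin (j - h) (k - h)))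
    else 0)"

definition rho :: "skein \<Rightarrow> skein" where
  "rho c X j k = qbin j k * c X j k"
definition rho_inv :: "skein \<Rightarrow> skein" where
  "rho_inv c X j k = c X j k / qbin j k"

definition Tt :: "skein \<Rightarrow> skein" where "Tt = rho \<circ> Ttw \<circ> rho_inv"
definition Rt :: "skein \<Rightarrow> skein" where "Rt = rho \<circ> Rtw \<circ> rho_inv"

datatype letter = LT | LR

definition letter_op :: "letter \<Rightarrow> skein \<Rightarrow> skein" where
  "letter_op l = (case l of LT \<Rightarrow> Tt | LR \<Rightarrow> Rt)"

definition word_op :: "letter list \<Rightarrow> skein \<Rightarrow> skein" where
  "word_op w F = foldr letter_op w F"

definition F0 :: skein where
  "F0 X j k = (if X = UP \<and> k = 0 then 1 else 0)"

text \<open>Quiver form: coefficient of X'[j,k] is the sum over d in N^(m+n), |d| = j,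
  d_1+...+d_m = k (and X' = X). Vectors indexed by 0..m+n-1, extended by 0.\<close>
definition quiver_form :: "nat \<Rightarrow> nat \<Rightarrow> (nat \<Rightarrow> int) \<Rightarrow> (nat \<Rightarrow> int) \<Rightarrow> (nat \<Rightarrow> nat \<Rightarrow> int)
    \<Rightarrow> orient \<Rightarrow> skein" where
  "quiver_form m n S A Q X X' j k =
     (if X' = X then
       (\<Sum>d\<in>{d. (\<forall>i\<ge>m+n. d i = 0) \<and> (\<Sum>i<m+n. d i) = j \<and> (\<Sum>i<m. d i) = k}.
          (- qv) powi (\<Sum>i<m+n. S i * zi (d i))
        * av powi (\<Sum>i<m+n. A i * zi (d i))
        * qv powi (\<Sum>i<m+n. \<Sum>i'<m+n. zi (d i) * Q i i' * zi (d i'))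
        * (qpoch (qv ^ 2) j / (\<Prod>i<m+n. qpoch (qv ^ 2) (d i))))
     else 0)"

end

theory Submission
  imports Defs
begin


lemma Fract_pow: "(Fract (x::'a::idom) 1) ^ n = Fract (x ^ n) 1"
  by (induction n) (simp_all add: One_fract_def)

lemma qv_pow: "qv ^ n = Fract ([:[:0,1:]:] ^ n) 1"
  unfolding qv_def by (rule Fract_pow)

lemma qv_nz: "qv \<noteq> 0"
  unfolding qv_def by (simp add: Zero_fract_def eq_fract)

lemma av_nz: "av \<noteq> 0"
  unfolding av_def by (simp add: Zero_fract_def eq_fract)

lemma qv_pow_ne1: "n > 0 \<Longrightarrow> qv ^ n \<noteq> 1"
proof
  assume n: "n > 0" and e: "qv ^ n = 1"
  have "[:[:0,1:]:] ^ n = (1 :: rat poly poly)"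
    using e unfolding qv_pow by (simp add: One_fract_def eq_fract)
  hence "[:[:0,1:] ^ n:] = (1 :: rat poly poly)" by (simp add: pCons_one poly_const_pow)
  hence "[:0,1:] ^ n = (1::rat poly)" by (metis one_poly_eq_simps(1) pCons_eq_iff)
  hence "degree ([:0,1:] ^ n :: rat poly) = 0" by simp
  moreover have "degree ([:0,1:] ^ n :: rat poly) = n" by (simp add: degree_power_eq)
  ultimately show False using n by simp
qed

lemma P_nz: "qpoch (qv^2) n \<noteq> 0"
proof -
  have "\<forall>i<n. 1 - qv^2 * qv^(2*i) \<noteq> 0"
  proof (intro allI impI)
    fix i
    have "qv^2 * qv^(2*i) = qv^(2*i+2)" by (metis power_add add.commute)
    thus "1 - qv^2 * qv^(2*i) \<noteq> 0" using qv_pow_ne1[of "2*i+2"] by (metis eq_iff_diff_eq_0 zero_less_Suc add_2_eq_Suc')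
  qed
  thus ?thesis unfolding qpoch_def by (simp add: prod_zero_iff)
qed


abbreviation "tq \<equiv> qv^2"
abbreviation "PP n \<equiv> qpoch (qv^2) n"

lemma tq_pow_ne1: "n > 0 \<Longrightarrow> tq ^ n \<noteq> 1"
  using qv_pow_ne1[of "2*n"] by (simp add: power_mult)

lemma one_m_tq_nz: "n > 0 \<Longrightarrow> 1 - tq ^ n \<noteq> 0"
  using tq_pow_ne1 by simp

lemma PP_Suc: "PP (Suc n) = PP n * (1 - tq ^ Suc n)"
  unfolding qpoch_def by (simp add: power_mult power_Suc)

lemma PP_0: "PP 0 = 1" unfolding qpoch_def by simp

definition B :: "nat \<Rightarrow> nat \<Rightarrow> Qaq" where
  "B n k = (if k \<le> n then qbin n k else 0)"

lemma qbin_0: "qbin n 0 = 1"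
  unfolding qbin_def using P_nz[of n] by (simp add: PP_0)

lemma qbin_n: "qbin n n = 1"
  unfolding qbin_def using P_nz[of n] by (simp add: PP_0)

lemma B_0: "B n 0 = 1" by (simp add: B_def qbin_0)

lemma field_pascal:
  fixes Pn Pk Pr u v :: "'a::field"
  assumes "Pk \<noteq> 0" "Pr \<noteq> 0" "1 - u \<noteq> 0" "1 - v \<noteq> 0"
  shows "Pn * (1 - v * u) / (Pk * (1 - u) * (Pr * (1 - v))) = Pn / (Pk * (1 - u) * Pr) + v * (Pn / (Pk * (Pr * (1 - v))))"
proof -
  have e: "1/(1-u) + v/(1-v) = (1 - v*u)/((1-u)*(1-v))"
    using assms by (simp add: field_simps)
  have "Pn / (Pk * (1 - u) * Pr) + v * (Pn / (Pk * (Pr * (1 - v)))) = Pn/(Pk*Pr) * (1/(1-u) + v/(1-v))"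
    by (simp add: divide_inverse inverse_mult_distrib ac_simps distrib_left)
  also have "\<dots> = Pn/(Pk*Pr) * ((1 - v*u)/((1-u)*(1-v)))" by (simp only: e)
  also have "\<dots> = (Pn*(1-v*u))/((Pk*Pr)*((1-u)*(1-v)))" by (rule times_divide_times_eq)
  also have "\<dots> = Pn * (1 - v * u) / (Pk * (1 - u) * (Pr * (1 - v)))" by (simp add: divide_inverse inverse_mult_distrib ac_simps)
  finally show ?thesis by simp
qed

lemma pascal:
  assumes "k \<le> n"
  shows "qbin (Suc n) (Suc k) = B n (Suc k) + tq^(n-k) * qbin n k"
proof (cases "n = k")
  case True
  then show ?thesis by (simp add: B_def qbin_n)
next
  case False
  then obtain r where r: "n - k = Suc r" using assms by (metis Suc_diff_le diff_Suc_Suc diff_self_eq_0 le_antisym not0_implies_Suc zero_less_diff nat_less_le)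
  have n: "n = k + Suc r" using r assms by simp
  define u where "u = tq ^ Suc k"
  define v where "v = tq ^ Suc r"
  have e1: "1 - u \<noteq> 0" unfolding u_def by (rule one_m_tq_nz) simp
  have e2: "1 - v \<noteq> 0" unfolding v_def by (rule one_m_tq_nz) simp
  have p1: "PP k \<noteq> 0" "PP r \<noteq> 0" by (rule P_nz)+
  have uv: "tq ^ Suc n = v * u"
  proof -
    have "Suc n = Suc r + Suc k" using n by simp
    thus ?thesis unfolding u_def v_def by (simp only: power_add)
  qed
  have "qbin (Suc n) (Suc k) = PP n * (1 - tq ^ Suc n) / (PP (Suc k) * PP (Suc r))"
  proof -
    have snk: "Suc n - Suc k = Suc r" using r by simp
    show ?thesis unfolding qbin_def snk PP_Suc[of n] by (rule refl)
  qed
  also have "\<dots> = PP n * (1 - v * u) / (PP k * (1 - u) * (PP r * (1 - v)))"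
    by (simp only: PP_Suc uv u_def v_def)
  also have "\<dots> = PP n / (PP k * (1 - u) * PP r) + v * (PP n / (PP k * (PP r * (1 - v))))"
    by (rule field_pascal[OF p1 e1 e2])
  also have "PP n / (PP k * (1 - u) * PP r) = B n (Suc k)"
    unfolding B_def qbin_def u_def using n by (simp add: PP_Suc)
  also have "PP n / (PP k * (PP r * (1 - v))) = qbin n k"
    unfolding qbin_def v_def using n by (simp add: PP_Suc)
  also have "v = tq^(n-k)" unfolding v_def using r by simp
  finally show ?thesis .
qed

lemma pascalB: "B (Suc y) (Suc b) = B y (Suc b) + tq^(y-b) * B y b"
proof (cases "b \<le> y")
  case True thus ?thesis using pascal[OF True] by (simp add: B_def)
next
  case False thus ?thesis by (simp add: B_def)
qed

lemma vandermonde: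
  "B (x+y) H = (\<Sum>a\<le>H. B x a * B y (H-a) * tq^((x-a)*(H-a)))"
proof (induction y arbitrary: H)
  case 0
  have "(\<Sum>a\<le>H. B x a * B 0 (H-a) * tq^((x-a)*(H-a))) = (\<Sum>a\<in>{H}. B x a * B 0 (H-a) * tq^((x-a)*(H-a)))"
    by (rule sum.mono_neutral_right) (auto simp: B_def)
  then show ?case by (simp add: B_0)
next
  case (Suc y)
  show ?case
  proof (cases H)
    case 0
    then show ?thesis by (simp add: B_0)
  next
    case (Suc H')
    have "B (x + Suc y) H = B (x+y) (Suc H') + tq^(x+y-H') * B (x+y) H'"
      using pascalB[of "x+y" H'] Suc by simp
    also have "\<dots> = (\<Sum>a\<le>Suc H'. B x a * B y (Suc H'-a) * tq^((x-a)*(Suc H'-a)))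
       + (\<Sum>a\<le>H'. B x a * B y (H'-a) * tq^(y-(H'-a)) * tq^((x-a)*(Suc H'-a)))"
    proof -
      have "tq^(x+y-H') * B (x+y) H' = (\<Sum>a\<le>H'. B x a * B y (H'-a) * tq^(y-(H'-a)) * tq^((x-a)*(Suc H'-a)))"
        unfolding Suc.IH[of H'] sum_distrib_left
      proof (rule sum.cong[OF refl])
        fix a assume a: "a \<in> {..H'}"
        show "tq ^ (x + y - H') * (B x a * B y (H' - a) * tq ^ ((x - a) * (H' - a))) =
           B x a * B y (H' - a) * tq ^ (y - (H' - a)) * tq ^ ((x - a) * (Suc H' - a))"
        proof (cases "a \<le> x \<and> H' - a \<le> y")
          case True
          have "Suc H' - a = Suc (H' - a)" using a by auto
          have "x + y - H' + (x - a) * (H' - a) = y - (H' - a) + (x - a) * (Suc H' - a)"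
          proof -
            obtain b c where bc: "x = a + b" "H' = a + c" using True a by (metis le_add_diff_inverse atMost_iff)
            have "c \<le> y" using True bc by simp
            thus ?thesis using bc by (simp add: algebra_simps)
          qed
          hence "tq ^ (x + y - H') * tq ^ ((x - a) * (H' - a)) = tq ^ (y - (H' - a)) * tq ^ ((x - a) * (Suc H' - a))"
            by (metis power_add)
          thus ?thesis by (simp add: algebra_simps)
        next
          case False thus ?thesis by (auto simp: B_def)
        qed
      qed
      thus ?thesis using Suc.IH[of "Suc H'"] by simp
    qed
    also have "\<dots> = (\<Sum>a\<le>Suc H'. B x a * B (Suc y) (Suc H'-a) * tq^((x-a)*(Suc H'-a)))"
    proof -
      have "(\<Sum>a\<le>Suc H'. B x a * B (Suc y) (Suc H'-a) * tq^((x-a)*(Suc H'-a)))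
         = (\<Sum>a\<le>Suc H'. B x a * B y (Suc H'-a) * tq^((x-a)*(Suc H'-a)))
         + (\<Sum>a\<le>Suc H'. if a \<le> H' then B x a * B y (H'-a) * tq^(y-(H'-a)) * tq^((x-a)*(Suc H'-a)) else 0)"
        unfolding sum.distrib[symmetric]
      proof (rule sum.cong[OF refl])
        fix a assume a: "a \<in> {..Suc H'}"
        show "B x a * B (Suc y) (Suc H' - a) * tq ^ ((x - a) * (Suc H' - a)) =
          B x a * B y (Suc H' - a) * tq ^ ((x - a) * (Suc H' - a)) +
          (if a \<le> H' then B x a * B y (H' - a) * tq ^ (y - (H' - a)) * tq ^ ((x - a) * (Suc H' - a)) else 0)"
        proof (cases "a \<le> H'")
          case True
          hence "Suc H' - a = Suc (H' - a)" by auto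
          thus ?thesis using True pascalB[of y "H'-a"] by (simp add: algebra_simps)
        next
          case False
          hence "a = Suc H'" using a by auto
          thus ?thesis by (simp add: B_0)
        qed
      qed
      also have "(\<Sum>a\<le>Suc H'. if a \<le> H' then B x a * B y (H'-a) * tq^(y-(H'-a)) * tq^((x-a)*(Suc H'-a)) else 0)
          = (\<Sum>a\<le>H'. B x a * B y (H'-a) * tq^(y-(H'-a)) * tq^((x-a)*(Suc H'-a)))"
        by (simp add: sum.atMost_Suc)
      finally show ?thesis by simp
    qed
    finally show ?thesis using Suc by simp
  qed
qed


definition SplAll :: "nat \<Rightarrow> nat \<Rightarrow> (nat \<Rightarrow> nat) \<Rightarrow> (nat \<Rightarrow> nat) set" where
  "SplAll s p d = {a. (\<forall>i. (i < s \<or> s+p \<le> i) \<longrightarrow> a i = 0) \<and> (\<forall>i. s \<le> i \<and> i < s+p \<longrightarrow> a i \<le> d i)}"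

definition Spl :: "nat \<Rightarrow> nat \<Rightarrow> (nat \<Rightarrow> nat) \<Rightarrow> nat \<Rightarrow> (nat \<Rightarrow> nat) set" where
  "Spl s p d H = {a \<in> SplAll s p d. (\<Sum>i\<in>{s..<s+p}. a i) = H}"

definition crossDA :: "nat \<Rightarrow> nat \<Rightarrow> (nat \<Rightarrow> nat) \<Rightarrow> (nat \<Rightarrow> nat) \<Rightarrow> nat" where
  "crossDA s p d a = (\<Sum>i\<in>{s..<s+p}. \<Sum>l\<in>{s..<s+p}. if i < l then (d i - a i) * a l else 0)"

lemma finite_Spl: "finite (Spl s p d H)"
proof -
  have "Spl s p d H \<subseteq> {a. \<forall>x. (x \<in> {s..<s+p} \<longrightarrow> a x \<in> {..H}) \<and> (x \<notin> {s..<s+p} \<longrightarrow> a x = 0)}"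
  proof
    fix a assume a: "a \<in> Spl s p d H"
    { fix x assume x: "x \<in> {s..<s+p}"
      have "a x \<le> (\<Sum>i\<in>{s..<s+p}. a i)" by (rule member_le_sum) (use x in auto)
      hence "a x \<le> H" using a by (simp add: Spl_def) }
    thus "a \<in> {a. \<forall>x. (x \<in> {s..<s+p} \<longrightarrow> a x \<in> {..H}) \<and> (x \<notin> {s..<s+p} \<longrightarrow> a x = 0)}"
      using a by (auto simp: Spl_def SplAll_def)
  qed
  thus ?thesis by (rule finite_subset) (rule finite_set_of_finite_funs; simp)
qed

lemma Spl_Suc:
  "Spl s (Suc p) d H = (\<lambda>(x,a). a(s+p := x)) ` (SIGMA x:{x. x \<le> H \<and> x \<le> d (s+p)}. Spl s p d (H - x))"
proof (intro equalityI subsetI)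
  fix a' assume a': "a' \<in> Spl s (Suc p) d H"
  let ?x = "a' (s+p)" and ?a = "a'(s+p := 0)"
  have sum: "(\<Sum>i\<in>{s..<s+Suc p}. a' i) = (\<Sum>i\<in>{s..<s+p}. a' i) + ?x" by simp
  have eq: "(\<Sum>i\<in>{s..<s+p}. ?a i) = (\<Sum>i\<in>{s..<s+p}. a' i)" by (rule sum.cong) auto
  have "?x \<le> H" using a' sum by (simp add: Spl_def)
  moreover have "?x \<le> d (s+p)" using a' by (simp add: Spl_def SplAll_def)
  moreover have "?a \<in> Spl s p d (H - ?x)" using a' sum eq by (auto simp: Spl_def SplAll_def)
  moreover have "a' = ?a(s+p := ?x)" by simp
  ultimately show "a' \<in> (\<lambda>(x,a). a(s+p := x)) ` (SIGMA x:{x. x \<le> H \<and> x \<le> d (s+p)}. Spl s p d (H - x))"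
    by (intro image_eqI[of _ _ "(?x, ?a)"]) auto
next
  fix a' assume "a' \<in> (\<lambda>(x,a). a(s+p := x)) ` (SIGMA x:{x. x \<le> H \<and> x \<le> d (s+p)}. Spl s p d (H - x))"
  then obtain x a where xa: "x \<le> H" "x \<le> d (s+p)" "a \<in> Spl s p d (H - x)" and a': "a' = a(s+p := x)" by auto
  have eq: "(\<Sum>i\<in>{s..<s+p}. a' i) = (\<Sum>i\<in>{s..<s+p}. a i)" unfolding a' by (rule sum.cong) auto
  have "(\<Sum>i\<in>{s..<s+Suc p}. a' i) = (\<Sum>i\<in>{s..<s+p}. a' i) + x" using a' by simp
  thus "a' \<in> Spl s (Suc p) d H" using xa eq a' by (auto simp: Spl_def SplAll_def)
qed

lemma inj_upd: "inj_on (\<lambda>(x,a). a(s+p := x)) (SIGMA x:X. Spl s p d (Hf x))"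
proof (rule inj_onI, clarify)
  fix x a y b
  assume a: "a \<in> Spl s p d (Hf x)" and b: "b \<in> Spl s p d (Hf y)" and e: "a(s + p := x) = b(s + p := y)"
  have "x = y" using fun_cong[OF e, of "s+p"] by simp
  moreover have "a = b"
  proof
    fix i show "a i = b i"
    proof (cases "i = s+p")
      case True thus ?thesis using a b by (simp add: Spl_def SplAll_def)
    next
      case False thus ?thesis using fun_cong[OF e, of i] by simp
    qed
  qed
  ultimately show "x = y \<and> a = b" by simp
qed

lemma multi_vandermonde:
  "B (\<Sum>i\<in>{s..<s+p}. d i) H = (\<Sum>a\<in>Spl s p d H. (\<Prod>i\<in>{s..<s+p}. B (d i) (a i)) * tq ^ crossDA s p d a)"
proof (induction p arbitrary: H)
  case 0
  have "Spl s 0 d H = (if H = 0 then {\<lambda>_. 0} else {})"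
    by (auto simp: Spl_def SplAll_def fun_eq_iff) (metis not_less)
  then show ?case by (simp add: B_def qbin_n crossDA_def)
next
  case (Suc p)
  let ?l = "s+p"
  let ?E = "\<Sum>i\<in>{s..<s+p}. d i"
  let ?F = "\<lambda>p a. (\<Prod>i\<in>{s..<s+p}. B (d i) (a i)) * tq ^ crossDA s p d a"
  have step: "?F (Suc p) (a(?l := x)) = B (d ?l) x * tq ^ ((?E - (H - x)) * x) * ?F p a"
    if a: "a \<in> Spl s p d (H - x)" and x: "x \<le> H" for a x
  proof -
    have pr: "(\<Prod>i\<in>{s..<s+Suc p}. B (d i) ((a(?l := x)) i)) = (\<Prod>i\<in>{s..<s+p}. B (d i) (a i)) * B (d ?l) x"
    proof -
      have "(\<Prod>i\<in>{s..<s+Suc p}. B (d i) ((a(?l := x)) i)) = (\<Prod>i\<in>{s..<s+p}. B (d i) ((a(?l := x)) i)) * B (d ?l) x"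
        by simp
      also have "(\<Prod>i\<in>{s..<s+p}. B (d i) ((a(?l := x)) i)) = (\<Prod>i\<in>{s..<s+p}. B (d i) (a i))"
        by (rule prod.cong) auto
      finally show ?thesis .
    qed
    have sa: "(\<Sum>i\<in>{s..<s+p}. a i) = H - x" using a by (simp add: Spl_def)
    have ale: "\<And>i. i\<in>{s..<s+p} \<Longrightarrow> a i \<le> d i" using a by (simp add: Spl_def SplAll_def)
    have cr: "crossDA s (Suc p) d (a(?l := x)) = crossDA s p d a + (?E - (H - x)) * x"
    proof -
      let ?g = "\<lambda>a i l. if i < l then (d i - a i) * a l else (0::nat)"
      let ?a' = "a(?l := x)"
      have "crossDA s (Suc p) d ?a' = (\<Sum>i\<in>{s..<s+Suc p}. \<Sum>l\<in>{s..<s+Suc p}. ?g ?a' i l)"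
        by (simp add: crossDA_def)
      also have "\<dots> = (\<Sum>i\<in>{s..<s+p}. (\<Sum>l\<in>{s..<s+p}. ?g ?a' i l) + ?g ?a' i ?l) + (\<Sum>l\<in>{s..<s+Suc p}. ?g ?a' ?l l)"
        by simp
      also have "(\<Sum>l\<in>{s..<s+Suc p}. ?g ?a' ?l l) = 0" by (intro sum.neutral) auto
      also have "(\<Sum>i\<in>{s..<s+p}. (\<Sum>l\<in>{s..<s+p}. ?g ?a' i l) + ?g ?a' i ?l)
          = (\<Sum>i\<in>{s..<s+p}. (\<Sum>l\<in>{s..<s+p}. ?g a i l) + (d i - a i) * x)"
        by (intro sum.cong refl arg_cong2[where f="(+)"]) auto
      also have "\<dots> = crossDA s p d a + (\<Sum>i\<in>{s..<s+p}. d i - a i) * x"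
        by (simp add: crossDA_def sum.distrib sum_distrib_right)
      also have "(\<Sum>i\<in>{s..<s+p}. d i - a i) = ?E - (H - x)"
        using sum_subtractf_nat[of "{s..<s+p}" a d, OF ale] sa by simp
      finally show ?thesis by (simp only: add_0_right)
    qed
    show ?thesis unfolding pr cr by (simp add: power_add ac_simps)
  qed
  have "(\<Sum>a'\<in>Spl s (Suc p) d H. ?F (Suc p) a')
      = (\<Sum>(x,a)\<in>(SIGMA x:{x. x \<le> H \<and> x \<le> d ?l}. Spl s p d (H - x)). ?F (Suc p) (a(?l := x)))"
    unfolding Spl_Suc by (subst sum.reindex[OF inj_upd]) (simp add: case_prod_unfold)
  also have "\<dots> = (\<Sum>x\<in>{x. x \<le> H \<and> x \<le> d ?l}. \<Sum>a\<in>Spl s p d (H - x). ?F (Suc p) (a(?l := x)))"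
    by (rule sum.Sigma[symmetric]) (auto simp: finite_Spl)
  also have "\<dots> = (\<Sum>x\<in>{x. x \<le> H \<and> x \<le> d ?l}. B (d ?l) x * tq ^ ((?E - (H - x)) * x) * B ?E (H - x))"
  proof (rule sum.cong[OF refl])
    fix x assume x: "x \<in> {x. x \<le> H \<and> x \<le> d ?l}"
    have "(\<Sum>a\<in>Spl s p d (H - x). ?F (Suc p) (a(?l := x))) = (\<Sum>a\<in>Spl s p d (H - x). B (d ?l) x * tq ^ ((?E - (H - x)) * x) * ?F p a)"
      by (rule sum.cong[OF refl]) (rule step, use x in auto)
    also have "\<dots> = B (d ?l) x * tq ^ ((?E - (H - x)) * x) * (\<Sum>a\<in>Spl s p d (H - x). ?F p a)"
      by (simp only: sum_distrib_left)
    also have "(\<Sum>a\<in>Spl s p d (H - x). ?F p a) = B ?E (H - x)" by (rule Suc.IH[symmetric])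
    finally show "(\<Sum>a\<in>Spl s p d (H - x). ?F (Suc p) (a(?l := x))) = B (d ?l) x * tq ^ ((?E - (H - x)) * x) * B ?E (H - x)" .
  qed
  also have "\<dots> = (\<Sum>x\<le>H. B (d ?l) x * tq ^ ((?E - (H - x)) * x) * B ?E (H - x))"
    by (rule sum.mono_neutral_left) (auto simp: B_def)
  also have "\<dots> = (\<Sum>a\<le>H. B ?E a * B (d ?l) (H - a) * tq ^ ((?E - a) * (H - a)))"
    by (rule sum.reindex_bij_witness[where i="\<lambda>x. H - x" and j="\<lambda>x. H - x"]) (auto simp: ac_simps)
  also have "\<dots> = B (?E + d ?l) H" by (rule vandermonde[symmetric])
  finally show ?case by simp
qed


lemma sum_block: fixes g :: "nat \<Rightarrow> 'a::comm_monoid_add" shows "(\<Sum>i\<in>{s..<s+p}. g i) = (\<Sum>r<p. g (s+r))"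
  using sum.shift_bounds_nat_ivl[of g 0 s p] by (simp add: atLeast0LessThan add.commute)
lemma prod_block: fixes g :: "nat \<Rightarrow> 'a::comm_monoid_mult" shows "(\<Prod>i\<in>{s..<s+p}. g i) = (\<Prod>r<p. g (s+r))"
  using prod.shift_bounds_nat_ivl[of g 0 s p] by (simp add: atLeast0LessThan add.commute)

lemma sum_split3:
  fixes g :: "nat \<Rightarrow> 'a::comm_monoid_add" and s p N :: nat
  assumes "s + p \<le> N"
  shows "(\<Sum>i<N. g i) = (\<Sum>i<s. g i) + (\<Sum>r<p. g (s+r)) + (\<Sum>i\<in>{s+p..<N}. g i)"
proof -
  have "(\<Sum>i<N. g i) = (\<Sum>i\<in>{0..<s+p}. g i) + (\<Sum>i\<in>{s+p..<N}. g i)"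
    using sum.atLeastLessThan_concat[of 0 "s+p" N g] assms by (simp add: atLeast0LessThan)
  also have "(\<Sum>i\<in>{0..<s+p}. g i) = (\<Sum>i\<in>{0..<s}. g i) + (\<Sum>i\<in>{s..<s+p}. g i)"
    using sum.atLeastLessThan_concat[of 0 s "s+p" g] by simp
  finally show ?thesis by (simp add: sum_block atLeast0LessThan)
qed

lemma prod_split3:
  fixes g :: "nat \<Rightarrow> 'a::comm_monoid_mult" and s p N :: nat
  assumes "s + p \<le> N"
  shows "(\<Prod>i<N. g i) = (\<Prod>i<s. g i) * (\<Prod>r<p. g (s+r)) * (\<Prod>i\<in>{s+p..<N}. g i)"
proof -
  have "(\<Prod>i<N. g i) = (\<Prod>i\<in>{0..<s+p}. g i) * (\<Prod>i\<in>{s+p..<N}. g i)"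
    using prod.atLeastLessThan_concat[of 0 "s+p" N g] assms by (simp add: atLeast0LessThan)
  also have "(\<Prod>i\<in>{0..<s+p}. g i) = (\<Prod>i\<in>{0..<s}. g i) * (\<Prod>i\<in>{s..<s+p}. g i)"
    using prod.atLeastLessThan_concat[of 0 s "s+p" g] by simp
  finally show ?thesis by (simp add: prod_block atLeast0LessThan)
qed

lemma sum_ext: fixes g :: "nat \<Rightarrow> 'a::comm_monoid_add" and N p :: nat shows "(\<Sum>i<N+p. g i) = (\<Sum>i<N. g i) + (\<Sum>r<p. g (N+r))"
proof -
  have "(\<Sum>i<N+p. g i) = (\<Sum>i\<in>{0..<N}. g i) + (\<Sum>i\<in>{N..<N+p}. g i)"
    using sum.atLeastLessThan_concat[of 0 N "N+p" g] by (simp add: atLeast0LessThan)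
  thus ?thesis by (simp add: sum_block atLeast0LessThan)
qed

lemma prod_ext: fixes g :: "nat \<Rightarrow> 'a::comm_monoid_mult" and N p :: nat shows "(\<Prod>i<N+p. g i) = (\<Prod>i<N. g i) * (\<Prod>r<p. g (N+r))"
proof -
  have "(\<Prod>i<N+p. g i) = (\<Prod>i\<in>{0..<N}. g i) * (\<Prod>i\<in>{N..<N+p}. g i)"
    using prod.atLeastLessThan_concat[of 0 N "N+p" g] by (simp add: atLeast0LessThan)
  thus ?thesis by (simp add: prod_block atLeast0LessThan)
qed

definition emb :: "nat \<Rightarrow> nat \<Rightarrow> nat \<Rightarrow> (nat \<Rightarrow> nat) \<Rightarrow> (nat \<Rightarrow> nat) \<Rightarrow> nat \<Rightarrow> nat" where
  "emb N s p d a = (\<lambda>i. if i < N then (if s \<le> i \<and> i < s+p then a i else d i)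
     else if i < N + p then d (s + (i - N)) - a (s + (i - N)) else 0)"

lemma emb_lo: "i < s \<Longrightarrow> s + p \<le> N \<Longrightarrow> emb N s p d a i = d i" by (simp add: emb_def)
lemma emb_blk: "r < p \<Longrightarrow> s + p \<le> N \<Longrightarrow> emb N s p d a (s+r) = a (s+r)" by (simp add: emb_def)
lemma emb_hi: "s + p \<le> i \<Longrightarrow> i < N \<Longrightarrow> emb N s p d a i = d i" by (simp add: emb_def)
lemma emb_ext: "r < p \<Longrightarrow> emb N s p d a (N+r) = d (s+r) - a (s+r)" by (simp add: emb_def)

lemma emb_sum_all:
  assumes "s + p \<le> N" "a \<in> SplAll s p d"
  shows "(\<Sum>i<N+p. emb N s p d a i) = (\<Sum>i<N. d i)"
proof -
  have ale: "\<And>r. r < p \<Longrightarrow> a (s+r) \<le> d (s+r)" using assms(2) by (simp add: SplAll_def)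
  have "(\<Sum>i<N+p. emb N s p d a i) = (\<Sum>i<N. emb N s p d a i) + (\<Sum>r<p. d (s+r) - a (s+r))"
    by (simp add: sum_ext emb_ext)
  also have "(\<Sum>i<N. emb N s p d a i) = (\<Sum>i<s. d i) + (\<Sum>r<p. a (s+r)) + (\<Sum>i\<in>{s+p..<N}. d i)"
    using assms(1) by (simp add: sum_split3[OF assms(1)] emb_lo emb_blk emb_hi)
  also have "(\<Sum>r<p. d (s+r) - a (s+r)) = (\<Sum>r<p. d (s+r)) - (\<Sum>r<p. a (s+r))"
    by (rule sum_subtractf_nat) (simp add: ale)
  also have "(\<Sum>r<p. a (s+r)) \<le> (\<Sum>r<p. d (s+r))" by (rule sum_mono) (simp add: ale)
  hence "(\<Sum>i<s. d i) + (\<Sum>r<p. a (s+r)) + (\<Sum>i\<in>{s+p..<N}. d i) + ((\<Sum>r<p. d (s+r)) - (\<Sum>r<p. a (s+r)))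
     = (\<Sum>i<N. d i)" by (simp add: sum_split3[OF assms(1)])
  finally show ?thesis .
qed

lemma emb_sum_act:
  assumes "s + p \<le> N"
  shows "(\<Sum>i<s+p. emb N s p d a i) = (\<Sum>i<s. d i) + (\<Sum>i\<in>{s..<s+p}. a i)"
  using sum_split3[of s p "s+p" "emb N s p d a"] assms by (simp add: emb_lo emb_blk sum_block)

lemma B_PP: "k \<le> n \<Longrightarrow> PP k * PP (n - k) * B n k = PP n"
  unfolding B_def qbin_def using P_nz[of k] P_nz[of "n-k"] by simp

lemma emb_prod:
  assumes "s + p \<le> N" "a \<in> SplAll s p d"
  shows "(\<Prod>i<N+p. PP (emb N s p d a i)) * (\<Prod>i\<in>{s..<s+p}. B (d i) (a i)) = (\<Prod>i<N. PP (d i))"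
proof -
  have ale: "\<And>r. r < p \<Longrightarrow> a (s+r) \<le> d (s+r)" using assms(2) by (simp add: SplAll_def)
  have "(\<Prod>i<N+p. PP (emb N s p d a i)) = (\<Prod>i<N. PP (emb N s p d a i)) * (\<Prod>r<p. PP (d (s+r) - a (s+r)))"
    by (simp add: prod_ext emb_ext)
  also have "(\<Prod>i<N. PP (emb N s p d a i)) = (\<Prod>i<s. PP (d i)) * (\<Prod>r<p. PP (a (s+r))) * (\<Prod>i\<in>{s+p..<N}. PP (d i))"
    using assms(1) by (simp add: prod_split3[OF assms(1)] emb_lo emb_blk emb_hi)
  finally have e1: "(\<Prod>i<N+p. PP (emb N s p d a i)) = (\<Prod>i<s. PP (d i)) * (\<Prod>r<p. PP (a (s+r))) * (\<Prod>i\<in>{s+p..<N}. PP (d i)) * (\<Prod>r<p. PP (d (s+r) - a (s+r)))" .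
  have "(\<Prod>i<N+p. PP (emb N s p d a i)) * (\<Prod>i\<in>{s..<s+p}. B (d i) (a i)) =
     (\<Prod>i<s. PP (d i)) * (\<Prod>i\<in>{s+p..<N}. PP (d i)) * ((\<Prod>r<p. PP (a (s+r))) * (\<Prod>r<p. PP (d (s+r) - a (s+r))) * (\<Prod>r<p. B (d (s+r)) (a (s+r))))"
    unfolding e1 prod_block by (simp only: ac_simps)
  also have "(\<Prod>r<p. PP (a (s+r))) * (\<Prod>r<p. PP (d (s+r) - a (s+r))) * (\<Prod>r<p. B (d (s+r)) (a (s+r)))
     = (\<Prod>r<p. PP (a (s+r)) * PP (d (s+r) - a (s+r)) * B (d (s+r)) (a (s+r)))"
    by (simp only: prod.distrib)
  also have "\<dots> = (\<Prod>r<p. PP (d (s+r)))"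
    by (rule prod.cong[OF refl]) (simp add: B_PP ale)
  also have "(\<Prod>i<s. PP (d i)) * (\<Prod>i\<in>{s+p..<N}. PP (d i)) * (\<Prod>r<p. PP (d (s+r))) = (\<Prod>i<N. PP (d i))"
    by (simp only: prod_split3[OF assms(1)] ac_simps)
  finally show ?thesis .
qed


definition Dset :: "nat \<Rightarrow> nat \<Rightarrow> (nat \<Rightarrow> nat) set" where
  "Dset N j = {d. (\<forall>i\<ge>N. d i = 0) \<and> (\<Sum>i<N. d i) = j}"

definition gset :: "nat \<Rightarrow> nat \<Rightarrow> nat \<Rightarrow> nat \<Rightarrow> (nat \<Rightarrow> nat) set" where
  "gset N m j k = {d. (\<forall>i\<ge>N. d i = 0) \<and> (\<Sum>i<N. d i) = j \<and> (\<Sum>i<m. d i) = k}"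

definition gqf :: "nat \<Rightarrow> nat \<Rightarrow> ((nat \<Rightarrow> nat) \<Rightarrow> Qaq) \<Rightarrow> nat \<Rightarrow> nat \<Rightarrow> Qaq" where
  "gqf N m W j k = (\<Sum>d\<in>gset N m j k. W d * (PP j / (\<Prod>i<N. PP (d i))))"

lemma finite_Dset: "finite (Dset N j)"
proof -
  have "Dset N j \<subseteq> {d. \<forall>x. (x \<in> {..<N} \<longrightarrow> d x \<in> {..j}) \<and> (x \<notin> {..<N} \<longrightarrow> d x = 0)}"
  proof
    fix d assume d: "d \<in> Dset N j"
    { fix x assume x: "x \<in> {..<N}"
      have "d x \<le> (\<Sum>i<N. d i)" by (rule member_le_sum) (use x in auto)
      hence "d x \<le> j" using d by (simp add: Dset_def) }
    thus "d \<in> {d. \<forall>x. (x \<in> {..<N} \<longrightarrow> d x \<in> {..j}) \<and> (x \<notin> {..<N} \<longrightarrow> d x = 0)}"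
      using d by (auto simp: Dset_def)
  qed
  thus ?thesis by (rule finite_subset) (rule finite_set_of_finite_funs; simp)
qed

lemma finite_gset: "finite (gset N m j k)"
  by (rule finite_subset[OF _ finite_Dset[of N j]]) (auto simp: gset_def Dset_def)

lemma emb_supp: "i \<ge> N + p \<Longrightarrow> emb N s p d a i = 0" by (simp add: emb_def)

lemma emb_inj:
  assumes "s + p \<le> N" "\<forall>i\<ge>N. d i = 0" "\<forall>i\<ge>N. d2 i = 0" "a \<in> SplAll s p d" "a2 \<in> SplAll s p d2"
    and e: "emb N s p d a = emb N s p d2 a2"
  shows "d = d2 \<and> a = a2"
proof -
  have aa: "a = a2"
  proof
    fix i show "a i = a2 i"
    proof (cases "s \<le> i \<and> i < s+p")
      case True thus ?thesis using fun_cong[OF e, of i] assms(1) by (simp add: emb_def)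
    next
      case False thus ?thesis using assms(4,5) by (auto simp: SplAll_def)
    qed
  qed
  have "d = d2"
  proof
    fix i show "d i = d2 i"
    proof (cases "i < N")
      case False thus ?thesis using assms(2,3) by simp
    next
      case iN: True
      show ?thesis
      proof (cases "s \<le> i \<and> i < s+p")
        case False thus ?thesis using fun_cong[OF e, of i] iN by (auto simp: emb_def split: if_splits)
      next
        case True
        then obtain r where r: "i = s + r" "r < p" by (metis add_less_cancel_left le_add_diff_inverse)
        have "emb N s p d a (N+r) = emb N s p d2 a2 (N+r)" using e by simp
        hence "d i - a i = d2 i - a2 i" using r by (simp add: emb_ext)
        moreover have "a i \<le> d i" "a2 i \<le> d2 i" using assms(4,5) True by (auto simp: SplAll_def)
        ultimately show ?thesis using aa by simp
      qed
    qed
  qed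
  with aa show ?thesis by simp
qed

lemma gset_image:
  assumes sp: "s + p \<le> N"
  shows "gset (N+p) (s+p) j h = (\<lambda>(d,a). emb N s p d a) ` (SIGMA d:{d\<in>Dset N j. (\<Sum>i<s. d i) \<le> h}. Spl s p d (h - (\<Sum>i<s. d i)))"
proof (intro equalityI subsetI)
  fix d' assume d': "d' \<in> gset (N+p) (s+p) j h"
  define d where "d = (\<lambda>i. if i < N then d' i + (if s \<le> i \<and> i < s+p then d' (N + (i - s)) else 0) else 0)"
  define a where "a = (\<lambda>i. if s \<le> i \<and> i < s+p then d' i else 0)"
  have supp: "\<forall>i\<ge>N. d i = 0" by (simp add: d_def)
  have aS: "a \<in> SplAll s p d" using sp by (auto simp: SplAll_def a_def d_def)
  have ee: "emb N s p d a = d'"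
  proof
    fix i show "emb N s p d a i = d' i"
    proof (cases "i < N")
      case True thus ?thesis by (auto simp: emb_def d_def a_def)
    next
      case False
      show ?thesis
      proof (cases "i < N + p")
        case True
        have "s + (i - N) < N" using True False sp by simp
        thus ?thesis using True False by (auto simp: emb_def d_def a_def)
      next
        case False2: False thus ?thesis using d' False by (simp add: emb_def gset_def)
      qed
    qed
  qed
  have s1: "(\<Sum>i<N. d i) = j" using emb_sum_all[OF sp aS] d' ee by (simp add: gset_def)
  have s2: "(\<Sum>i<s. d i) + (\<Sum>i\<in>{s..<s+p}. a i) = h" using emb_sum_act[OF sp, of d a] d' ee by (simp add: gset_def)
  have "(d, a) \<in> (SIGMA d:{d\<in>Dset N j. (\<Sum>i<s. d i) \<le> h}. Spl s p d (h - (\<Sum>i<s. d i)))"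
    using supp s1 s2 aS by (auto simp: Dset_def Spl_def)
  thus "d' \<in> (\<lambda>(d,a). emb N s p d a) ` (SIGMA d:{d\<in>Dset N j. (\<Sum>i<s. d i) \<le> h}. Spl s p d (h - (\<Sum>i<s. d i)))"
    using ee by (intro image_eqI[of _ _ "(d,a)"]) auto
next
  fix d' assume "d' \<in> (\<lambda>(d,a). emb N s p d a) ` (SIGMA d:{d\<in>Dset N j. (\<Sum>i<s. d i) \<le> h}. Spl s p d (h - (\<Sum>i<s. d i)))"
  then obtain d a where d: "d \<in> Dset N j" "(\<Sum>i<s. d i) \<le> h" and a: "a \<in> Spl s p d (h - (\<Sum>i<s. d i))"
    and e: "d' = emb N s p d a" by auto
  have aS: "a \<in> SplAll s p d" using a by (simp add: Spl_def)
  show "d' \<in> gset (N+p) (s+p) j h"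
    using emb_sum_all[OF sp aS] emb_sum_act[OF sp, of d a] d a e emb_supp
    by (auto simp: gset_def Dset_def Spl_def)
qed

lemma B_nz: "k \<le> n \<Longrightarrow> B n k \<noteq> 0"
  unfolding B_def qbin_def using P_nz[of n] P_nz[of k] P_nz[of "n-k"] by simp

lemma split_lemma:
  assumes sp: "s + p \<le> N"
    and hW: "\<And>d a. \<forall>i\<ge>N. d i = 0 \<Longrightarrow> a \<in> SplAll s p d \<Longrightarrow>
       W' (emb N s p d a) = W d * G d ((\<Sum>i<s. d i) + (\<Sum>i\<in>{s..<s+p}. a i)) * tq ^ crossDA s p d a"
  shows "gqf (N+p) (s+p) W' j h = (\<Sum>d\<in>Dset N j. if (\<Sum>i<s. d i) \<le> h then
      W d * (PP j / (\<Prod>i<N. PP (d i))) * G d h * B (\<Sum>i\<in>{s..<s+p}. d i) (h - (\<Sum>i<s. d i)) else 0)"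
proof -
  let ?S = "SIGMA d:{d\<in>Dset N j. (\<Sum>i<s. d i) \<le> h}. Spl s p d (h - (\<Sum>i<s. d i))"
  have inj: "inj_on (\<lambda>(d,a). emb N s p d a) ?S"
  proof (rule inj_onI, clarify)
    fix d a d2 a2 assume "d \<in> Dset N j" "a \<in> Spl s p d (h - (\<Sum>i<s. d i))"
      "d2 \<in> Dset N j" "a2 \<in> Spl s p d2 (h - (\<Sum>i<s. d2 i))" "emb N s p d a = emb N s p d2 a2"
    thus "d = d2 \<and> a = a2" using emb_inj[OF sp] by (auto simp: Dset_def Spl_def)
  qed
  have tm: "W' (emb N s p d a) * (PP j / (\<Prod>i<N+p. PP (emb N s p d a i)))
      = W d * (PP j / (\<Prod>i<N. PP (d i))) * G d h * ((\<Prod>i\<in>{s..<s+p}. B (d i) (a i)) * tq ^ crossDA s p d a)"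
    if d: "d \<in> Dset N j" "(\<Sum>i<s. d i) \<le> h" and a: "a \<in> Spl s p d (h - (\<Sum>i<s. d i))" for d a
  proof -
    have aS: "a \<in> SplAll s p d" using a by (simp add: Spl_def)
    have hh: "(\<Sum>i<s. d i) + (\<Sum>i\<in>{s..<s+p}. a i) = h" using a d by (simp add: Spl_def)
    have Bnz: "(\<Prod>i\<in>{s..<s+p}. B (d i) (a i)) \<noteq> 0"
      using aS by (auto simp: SplAll_def B_nz)
    have pe: "(\<Prod>i<N+p. PP (emb N s p d a i)) * (\<Prod>i\<in>{s..<s+p}. B (d i) (a i)) = (\<Prod>i<N. PP (d i))"
      by (rule emb_prod[OF sp aS])
    have "PP j / (\<Prod>i<N+p. PP (emb N s p d a i)) = PP j / (\<Prod>i<N. PP (d i)) * (\<Prod>i\<in>{s..<s+p}. B (d i) (a i))"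
      unfolding pe[symmetric] using Bnz by simp
    thus ?thesis using hW[OF _ aS] d hh by (simp add: Dset_def ac_simps)
  qed
  have "gqf (N+p) (s+p) W' j h = (\<Sum>(d,a)\<in>?S. W' (emb N s p d a) * (PP j / (\<Prod>i<N+p. PP (emb N s p d a i))))"
    unfolding gqf_def gset_image[OF sp] by (subst sum.reindex[OF inj]) (simp add: case_prod_unfold)
  also have "\<dots> = (\<Sum>d\<in>{d\<in>Dset N j. (\<Sum>i<s. d i) \<le> h}. \<Sum>a\<in>Spl s p d (h - (\<Sum>i<s. d i)). W' (emb N s p d a) * (PP j / (\<Prod>i<N+p. PP (emb N s p d a i))))"
    by (rule sum.Sigma[symmetric]) (auto simp: finite_Spl finite_Dset)
  also have "\<dots> = (\<Sum>d\<in>{d\<in>Dset N j. (\<Sum>i<s. d i) \<le> h}. W d * (PP j / (\<Prod>i<N. PP (d i))) * G d h * B (\<Sum>i\<in>{s..<s+p}. d i) (h - (\<Sum>i<s. d i)))"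
  proof (rule sum.cong[OF refl])
    fix d assume d: "d \<in> {d\<in>Dset N j. (\<Sum>i<s. d i) \<le> h}"
    have "(\<Sum>a\<in>Spl s p d (h - (\<Sum>i<s. d i)). W' (emb N s p d a) * (PP j / (\<Prod>i<N+p. PP (emb N s p d a i))))
       = (\<Sum>a\<in>Spl s p d (h - (\<Sum>i<s. d i)). W d * (PP j / (\<Prod>i<N. PP (d i))) * G d h * ((\<Prod>i\<in>{s..<s+p}. B (d i) (a i)) * tq ^ crossDA s p d a))"
      by (rule sum.cong[OF refl]) (rule tm, use d in auto)
    also have "\<dots> = W d * (PP j / (\<Prod>i<N. PP (d i))) * G d h * (\<Sum>a\<in>Spl s p d (h - (\<Sum>i<s. d i)). (\<Prod>i\<in>{s..<s+p}. B (d i) (a i)) * tq ^ crossDA s p d a)"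
      by (simp only: sum_distrib_left)
    also have "(\<Sum>a\<in>Spl s p d (h - (\<Sum>i<s. d i)). (\<Prod>i\<in>{s..<s+p}. B (d i) (a i)) * tq ^ crossDA s p d a) = B (\<Sum>i\<in>{s..<s+p}. d i) (h - (\<Sum>i<s. d i))"
      by (rule multi_vandermonde[symmetric])
    finally show "(\<Sum>a\<in>Spl s p d (h - (\<Sum>i<s. d i)). W' (emb N s p d a) * (PP j / (\<Prod>i<N+p. PP (emb N s p d a i)))) = W d * (PP j / (\<Prod>i<N. PP (d i))) * G d h * B (\<Sum>i\<in>{s..<s+p}. d i) (h - (\<Sum>i<s. d i))" .
  qed
  also have "\<dots> = (\<Sum>d\<in>Dset N j. if (\<Sum>i<s. d i) \<le> h then
      W d * (PP j / (\<Prod>i<N. PP (d i))) * G d h * B (\<Sum>i\<in>{s..<s+p}. d i) (h - (\<Sum>i<s. d i)) else 0)"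
    by (rule sum.inter_filter[OF finite_Dset])
  finally show ?thesis .
qed


definition wt :: "nat \<Rightarrow> (nat \<Rightarrow> int) \<Rightarrow> (nat \<Rightarrow> int) \<Rightarrow> (nat \<Rightarrow> nat \<Rightarrow> int) \<Rightarrow> (nat \<Rightarrow> nat) \<Rightarrow> Qaq" where
  "wt N S A Q d = (- qv) powi (\<Sum>i<N. S i * zi (d i)) * av powi (\<Sum>i<N. A i * zi (d i))
       * qv powi (\<Sum>i<N. \<Sum>i'<N. zi (d i) * Q i i' * zi (d i'))"

lemma qf_eq: "quiver_form m n S A Q X X' j k = (if X' = X then gqf (m+n) m (wt (m+n) S A Q) j k else 0)"
  by (simp add: quiver_form_def gqf_def gset_def wt_def)

definition io :: "nat \<Rightarrow> nat \<Rightarrow> nat \<Rightarrow> nat" where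
  "io N s i = (if i < N then i else s + (i - N))"

lemma pull:
  assumes sp: "s + p \<le> N" and aS: "a \<in> SplAll s p d"
  shows "(\<Sum>i<N+p. f (io N s i) * zi (emb N s p d a i)) = (\<Sum>k<N. f k * zi (d k))"
proof -
  have ale: "\<And>r. r < p \<Longrightarrow> a (s+r) \<le> d (s+r)" using aS by (simp add: SplAll_def)
  have "(\<Sum>i<N+p. f (io N s i) * zi (emb N s p d a i)) = (\<Sum>i<N. f i * zi (emb N s p d a i)) + (\<Sum>r<p. f (s+r) * zi (d (s+r) - a (s+r)))"
    by (simp add: sum_ext emb_ext io_def)
  also have "(\<Sum>i<N. f i * zi (emb N s p d a i)) = (\<Sum>i<s. f i * zi (d i)) + (\<Sum>r<p. f (s+r) * zi (a (s+r))) + (\<Sum>i\<in>{s+p..<N}. f i * zi (d i))"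
    using sp by (simp add: sum_split3[OF sp] emb_lo emb_blk emb_hi)
  also have "(\<Sum>r<p. f (s+r) * zi (d (s+r) - a (s+r))) = (\<Sum>r<p. f (s+r) * zi (d (s+r))) - (\<Sum>r<p. f (s+r) * zi (a (s+r)))"
    by (simp add: ale of_nat_diff sum_subtractf right_diff_distrib)
  finally show ?thesis by (simp add: sum_split3[OF sp])
qed

definition linf :: "nat \<Rightarrow> (nat \<Rightarrow> int) \<Rightarrow> (nat \<Rightarrow> nat) \<Rightarrow> int" where
  "linf N u d = (\<Sum>i<N. u i * zi (d i))"
definition quadf :: "nat \<Rightarrow> (nat \<Rightarrow> nat \<Rightarrow> int) \<Rightarrow> (nat \<Rightarrow> nat) \<Rightarrow> int" where
  "quadf N Q d = (\<Sum>i<N. \<Sum>i'<N. zi (d i) * Q i i' * zi (d i'))"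

lemma wt_alt: "wt N S A Q d = (- qv) powi (linf N S d) * av powi (linf N A d) * qv powi (quadf N Q d)"
  by (simp add: wt_def linf_def quadf_def)

lemma pull_quad:
  assumes sp: "s + p \<le> N" and aS: "a \<in> SplAll s p d"
  shows "quadf (N+p) (\<lambda>i i'. Q (io N s i) (io N s i')) (emb N s p d a) = quadf N Q d"
proof -
  let ?e = "emb N s p d a"
  have "quadf (N+p) (\<lambda>i i'. Q (io N s i) (io N s i')) ?e = (\<Sum>i<N+p. zi (?e i) * (\<Sum>i'<N+p. Q (io N s i) (io N s i') * zi (?e i')))"
    by (simp add: quadf_def sum_distrib_left ac_simps)
  also have "\<dots> = (\<Sum>i<N+p. (\<Sum>k'<N. Q (io N s i) k' * zi (d k')) * zi (?e i))"
  proof (rule sum.cong[OF refl])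
    fix i assume "i \<in> {..<N+p}"
    have "(\<Sum>i'<N+p. Q (io N s i) (io N s i') * zi (?e i')) = (\<Sum>k'<N. Q (io N s i) k' * zi (d k'))"
      by (rule pull[OF sp aS, of "\<lambda>k. Q (io N s i) k"])
    thus "zi (?e i) * (\<Sum>i'<N+p. Q (io N s i) (io N s i') * zi (?e i')) = (\<Sum>k'<N. Q (io N s i) k' * zi (d k')) * zi (?e i)"
      by simp
  qed
  also have "\<dots> = (\<Sum>k<N. (\<Sum>k'<N. Q k k' * zi (d k')) * zi (d k))"
    by (rule pull[OF sp aS, of "\<lambda>k. \<Sum>k'<N. Q k k' * zi (d k')"])
  also have "\<dots> = quadf N Q d"
    by (simp add: quadf_def sum_distrib_left sum_distrib_right ac_simps)
  finally show ?thesis .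
qed

lemma pull_lin:
  assumes sp: "s + p \<le> N" and aS: "a \<in> SplAll s p d"
  shows "linf (N+p) (\<lambda>i. f (io N s i)) (emb N s p d a) = linf N f d"
  unfolding linf_def by (rule pull[OF sp aS])

lemma lin_add: "linf N (\<lambda>i. u i + v i) d = linf N u d + linf N v d"
  by (simp add: linf_def sum.distrib algebra_simps)
lemma lin_scale: "linf N (\<lambda>i. c * u i) d = c * linf N u d"
  by (simp add: linf_def sum_distrib_left algebra_simps)
lemma quad_add: "quadf N (\<lambda>i i'. Q1 i i' + Q2 i i') d = quadf N Q1 d + quadf N Q2 d"
  by (simp add: quadf_def sum.distrib algebra_simps)
lemma quad_scale: "quadf N (\<lambda>i i'. c * Q i i') d = c * quadf N Q d"
  by (simp add: quadf_def sum_distrib_left algebra_simps)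
lemma quad_rank1: "quadf N (\<lambda>i i'. u i * v i') d = linf N u d * linf N v d"
  by (simp add: quadf_def linf_def sum_product algebra_simps)



definition CMh :: "nat \<Rightarrow> nat \<Rightarrow> nat \<Rightarrow> nat \<Rightarrow> nat \<Rightarrow> int" where
  "CMh N s p i i' = (if N \<le> i \<and> i < N+p \<and> s \<le> i' \<and> i' < s+p \<and> s + (i - N) < i' then 1 else 0)"

definition CM :: "nat \<Rightarrow> nat \<Rightarrow> nat \<Rightarrow> nat \<Rightarrow> nat \<Rightarrow> int" where
  "CM N s p i i' = CMh N s p i i' + CMh N s p i' i"

lemma quad_transpose: "quadf N (\<lambda>i i'. Q i' i) d = quadf N Q d"
  unfolding quadf_def by (subst sum.swap) (simp add: ac_simps)

lemma cross_quad:
  assumes sp: "s + p \<le> N" and aS: "a \<in> SplAll s p d"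
  shows "quadf (N+p) (CM N s p) (emb N s p d a) = 2 * zi (crossDA s p d a)"
proof -
  let ?e = "emb N s p d a"
  have "quadf (N+p) (CM N s p) ?e = quadf (N+p) (CMh N s p) ?e + quadf (N+p) (\<lambda>i i'. CMh N s p i' i) ?e"
    unfolding CM_def by (rule quad_add)
  also have "\<dots> = 2 * quadf (N+p) (CMh N s p) ?e" using quad_transpose[of "N+p" "CMh N s p" ?e] by simp
  also have "quadf (N+p) (CMh N s p) ?e = (\<Sum>r<p. \<Sum>r'<p. if r < r' then zi ((d (s+r) - a (s+r)) * a (s+r')) else 0)"
  proof -
    have "quadf (N+p) (CMh N s p) ?e = (\<Sum>i<N. \<Sum>i'<N+p. zi (?e i) * CMh N s p i i' * zi (?e i'))
        + (\<Sum>r<p. \<Sum>i'<N+p. zi (?e (N+r)) * CMh N s p (N+r) i' * zi (?e i'))"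
      unfolding quadf_def by (rule sum_ext)
    also have "(\<Sum>i<N. \<Sum>i'<N+p. zi (?e i) * CMh N s p i i' * zi (?e i')) = 0"
      by (intro sum.neutral ballI) (simp add: CMh_def)
    also have "(\<Sum>r<p. \<Sum>i'<N+p. zi (?e (N+r)) * CMh N s p (N+r) i' * zi (?e i'))
       = (\<Sum>r<p. \<Sum>r'<p. if r < r' then zi ((d (s+r) - a (s+r)) * a (s+r')) else 0)"
    proof (rule sum.cong[OF refl])
      fix r assume r: "r \<in> {..<p}"
      have sp2: "s + p \<le> N + p" using sp by simp
      have "(\<Sum>i'<N+p. zi (?e (N+r)) * CMh N s p (N+r) i' * zi (?e i'))
         = (\<Sum>i'<s. zi (?e (N+r)) * CMh N s p (N+r) i' * zi (?e i'))
         + (\<Sum>r'<p. zi (?e (N+r)) * CMh N s p (N+r) (s+r') * zi (?e (s+r')))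
         + (\<Sum>i'\<in>{s+p..<N+p}. zi (?e (N+r)) * CMh N s p (N+r) i' * zi (?e i'))"
        by (rule sum_split3[OF sp2])
      also have "(\<Sum>i'<s. zi (?e (N+r)) * CMh N s p (N+r) i' * zi (?e i')) = 0"
        by (intro sum.neutral ballI) (simp add: CMh_def)
      also have "(\<Sum>i'\<in>{s+p..<N+p}. zi (?e (N+r)) * CMh N s p (N+r) i' * zi (?e i')) = 0"
        by (intro sum.neutral ballI) (simp add: CMh_def)
      also have "(\<Sum>r'<p. zi (?e (N+r)) * CMh N s p (N+r) (s+r') * zi (?e (s+r')))
          = (\<Sum>r'<p. if r < r' then zi ((d (s+r) - a (s+r)) * a (s+r')) else 0)"
        by (rule sum.cong[OF refl]) (use r sp in \<open>simp add: CMh_def emb_ext emb_blk\<close>)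
      finally show "(\<Sum>i'<N+p. zi (?e (N+r)) * CMh N s p (N+r) i' * zi (?e i')) = (\<Sum>r'<p. if r < r' then zi ((d (s+r) - a (s+r)) * a (s+r')) else 0)"
        by simp
    qed
    finally show ?thesis by simp
  qed
  also have "(\<Sum>r<p. \<Sum>r'<p. if r < r' then zi ((d (s+r) - a (s+r)) * a (s+r')) else 0) = zi (crossDA s p d a)"
    unfolding crossDA_def sum_block of_nat_sum by (intro sum.cong refl) simp
  finally show ?thesis .
qed


lemma lin_comb: "linf N (\<lambda>i. \<Sum>x<M. c x * U x i) d = (\<Sum>x<M. c x * linf N (U x) d)"
proof -
  have "linf N (\<lambda>i. \<Sum>x<M. c x * U x i) d = (\<Sum>i<N. \<Sum>x<M. c x * U x i * zi (d i))"
    by (simp add: linf_def sum_distrib_right)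
  also have "\<dots> = (\<Sum>x<M. \<Sum>i<N. c x * U x i * zi (d i))" by (rule sum.swap)
  also have "\<dots> = (\<Sum>x<M. c x * linf N (U x) d)"
    by (simp add: linf_def sum_distrib_left ac_simps)
  finally show ?thesis .
qed

lemma quad_comb: "quadf N (\<lambda>i i'. \<Sum>x<M. \<Sum>y<M. c x y * U x i * U y i') d
   = (\<Sum>x<M. \<Sum>y<M. linf N (U x) d * c x y * linf N (U y) d)"
proof -
  have "quadf N (\<lambda>i i'. \<Sum>x<M. \<Sum>y<M. c x y * U x i * U y i') d
     = (\<Sum>i<N. \<Sum>i'<N. \<Sum>x<M. \<Sum>y<M. c x y * (U x i * zi (d i)) * (U y i' * zi (d i')))"
    by (simp add: quadf_def sum_distrib_left sum_distrib_right ac_simps)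
  also have "\<dots> = (\<Sum>x<M. \<Sum>y<M. \<Sum>i<N. \<Sum>i'<N. c x y * (U x i * zi (d i)) * (U y i' * zi (d i')))"
  proof -
    have "(\<Sum>i<N. \<Sum>i'<N. \<Sum>x<M. \<Sum>y<M. c x y * (U x i * zi (d i)) * (U y i' * zi (d i')))
       = (\<Sum>i<N. \<Sum>x<M. \<Sum>i'<N. \<Sum>y<M. c x y * (U x i * zi (d i)) * (U y i' * zi (d i')))"
      by (intro sum.cong refl) (rule sum.swap)
    also have "\<dots> = (\<Sum>x<M. \<Sum>i<N. \<Sum>i'<N. \<Sum>y<M. c x y * (U x i * zi (d i)) * (U y i' * zi (d i')))"
      by (rule sum.swap)
    also have "\<dots> = (\<Sum>x<M. \<Sum>i<N. \<Sum>y<M. \<Sum>i'<N. c x y * (U x i * zi (d i)) * (U y i' * zi (d i')))"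
      by (intro sum.cong refl) (rule sum.swap)
    also have "\<dots> = (\<Sum>x<M. \<Sum>y<M. \<Sum>i<N. \<Sum>i'<N. c x y * (U x i * zi (d i)) * (U y i' * zi (d i')))"
      by (intro sum.cong refl) (rule sum.swap)
    finally show ?thesis .
  qed
  also have "\<dots> = (\<Sum>x<M. \<Sum>y<M. linf N (U x) d * c x y * linf N (U y) d)"
    by (simp add: linf_def sum_distrib_left sum_distrib_right ac_simps)
  finally show ?thesis .
qed

definition Uv :: "nat \<Rightarrow> nat \<Rightarrow> nat \<Rightarrow> nat \<Rightarrow> nat \<Rightarrow> nat \<Rightarrow> int" where
  "Uv N s p m x i = (if x = 0 then (if io N s i < m then 1 else 0) else if x = 1 then 1 else (if i < s+p then 1 else 0))"

definition newL :: "nat \<Rightarrow> nat \<Rightarrow> nat \<Rightarrow> nat \<Rightarrow> (nat \<Rightarrow> int) \<Rightarrow> (nat \<Rightarrow> int) \<Rightarrow> nat \<Rightarrow> int" where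
  "newL N s p m S cs i = S (io N s i) + (\<Sum>x<3. cs x * Uv N s p m x i)"

definition newQ :: "nat \<Rightarrow> nat \<Rightarrow> nat \<Rightarrow> nat \<Rightarrow> (nat \<Rightarrow> nat \<Rightarrow> int) \<Rightarrow> (nat \<Rightarrow> nat \<Rightarrow> int) \<Rightarrow> nat \<Rightarrow> nat \<Rightarrow> int" where
  "newQ N s p m Q cq i i' = Q (io N s i) (io N s i') + (\<Sum>x<3. \<Sum>y<3. cq x y * Uv N s p m x i * Uv N s p m y i') + CM N s p i i'"

definition v3 :: "int \<Rightarrow> int \<Rightarrow> int \<Rightarrow> nat \<Rightarrow> int" where
  "v3 k j h x = (if x = 0 then k else if x = 1 then j else h)"

definition twf :: "(nat \<Rightarrow> int) \<Rightarrow> (nat \<Rightarrow> int) \<Rightarrow> (nat \<Rightarrow> nat \<Rightarrow> int) \<Rightarrow> (nat \<Rightarrow> int) \<Rightarrow> Qaq" where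
  "twf cs ca cq v = (- qv) powi (\<Sum>x<3. cs x * v x) * av powi (\<Sum>x<3. ca x * v x) * qv powi (\<Sum>x<3. \<Sum>y<3. v x * cq x y * v y)"

lemma Uv_lin:
  assumes sp: "s + p \<le> N" and mN: "m \<le> N" and aS: "a \<in> SplAll s p d"
  shows "linf (N+p) (Uv N s p m x) (emb N s p d a) = v3 (zi (\<Sum>i<m. d i)) (zi (\<Sum>i<N. d i)) (zi ((\<Sum>i<s. d i) + (\<Sum>i\<in>{s..<s+p}. a i))) x"
proof -
  consider "x = 0" | "x = 1" | "x \<noteq> 0 \<and> x \<noteq> 1" by blast
  then show ?thesis
  proof cases
    case 1
    have "linf (N+p) (Uv N s p m x) (emb N s p d a) = linf (N+p) (\<lambda>i. (\<lambda>k. if k < m then 1 else 0) (io N s i)) (emb N s p d a)"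
      using 1 by (simp add: Uv_def[abs_def])
    also have "\<dots> = linf N (\<lambda>k. if k < m then 1 else 0) d" by (rule pull_lin[OF sp aS])
    also have "\<dots> = (\<Sum>i<N. if i < m then zi (d i) else 0)" unfolding linf_def by (rule sum.cong) auto
    also have "\<dots> = (\<Sum>i\<in>{..<N} \<inter> {i. i < m}. zi (d i))" by (simp add: sum.inter_restrict)
    also have "{..<N} \<inter> {i. i < m} = {..<m}" using mN by auto
    finally show ?thesis using 1 by (simp add: v3_def)
  next
    case 2
    have "linf (N+p) (Uv N s p m x) (emb N s p d a) = linf (N+p) (\<lambda>i. (\<lambda>k. 1) (io N s i)) (emb N s p d a)"
      using 2 by (simp add: Uv_def[abs_def])
    also have "\<dots> = linf N (\<lambda>k. 1) d" by (rule pull_lin[OF sp aS])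
    finally show ?thesis using 2 by (simp add: v3_def linf_def)
  next
    case 3
    have "linf (N+p) (Uv N s p m x) (emb N s p d a) = (\<Sum>i<N+p. if i < s+p then zi (emb N s p d a i) else 0)"
      using 3 unfolding Uv_def linf_def by (intro sum.cong refl) auto
    also have "\<dots> = (\<Sum>i\<in>{..<N+p} \<inter> {i. i < s+p}. zi (emb N s p d a i))" by (simp add: sum.inter_restrict)
    also have "{..<N+p} \<inter> {i. i < s+p} = {..<s+p}" using sp by auto
    also have "(\<Sum>i<s+p. zi (emb N s p d a i)) = zi ((\<Sum>i<s. d i) + (\<Sum>i\<in>{s..<s+p}. a i))"
      unfolding of_nat_sum[symmetric] emb_sum_act[OF sp] ..
    finally show ?thesis using 3 by (simp add: v3_def)
  qed
qed


lemma io_lt: "s + p \<le> N \<Longrightarrow> i < N + p \<Longrightarrow> io N s i < N"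
  by (auto simp: io_def)

lemma newQ_sym:
  assumes symQ: "\<forall>i<N. \<forall>i'<N. Q i i' = Q i' i" and symc: "\<forall>x y. cq x y = cq y x"
    and sp: "s + p \<le> N" and i: "i < N + p" "i' < N + p"
  shows "newQ N s p m Q cq i i' = newQ N s p m Q cq i' i"
proof -
  have "Q (io N s i) (io N s i') = Q (io N s i') (io N s i)" using symQ io_lt[OF sp i(1)] io_lt[OF sp i(2)] by simp
  moreover have "(\<Sum>x<3. \<Sum>y<3. cq x y * Uv N s p m x i * Uv N s p m y i') = (\<Sum>x<3. \<Sum>y<3. cq x y * Uv N s p m x i' * Uv N s p m y i)"
  proof -
    have "(\<Sum>x<3. \<Sum>y<3. cq x y * Uv N s p m x i * Uv N s p m y i') = (\<Sum>y<3. \<Sum>x<3. cq x y * Uv N s p m x i * Uv N s p m y i')"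
      by (rule sum.swap)
    also have "\<dots> = (\<Sum>y<3. \<Sum>x<3. cq y x * Uv N s p m y i' * Uv N s p m x i)"
      using symc by (simp add: ac_simps)
    finally show ?thesis .
  qed
  moreover have "CM N s p i i' = CM N s p i' i" by (simp add: CM_def)
  ultimately show ?thesis by (simp add: newQ_def)
qed

lemma powi_add3: "x \<noteq> 0 \<Longrightarrow> (x::Qaq) powi (a + b) = x powi a * x powi b"
  by (simp add: power_int_add)

lemma qf_split:
  assumes sp: "s + p \<le> N" and mN: "m \<le> N"
  shows "gqf (N+p) (s+p) (wt (N+p) (newL N s p m S cs) (newL N s p m A ca) (newQ N s p m Q cq)) j h
    = (\<Sum>d\<in>Dset N j. if (\<Sum>i<s. d i) \<le> h then
        wt N S A Q d * (PP j / (\<Prod>i<N. PP (d i))) * twf cs ca cq (v3 (zi (\<Sum>i<m. d i)) (zi (\<Sum>i<N. d i)) (zi h))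
          * B (\<Sum>i\<in>{s..<s+p}. d i) (h - (\<Sum>i<s. d i)) else 0)"
proof -
  let ?G = "\<lambda>d h. twf cs ca cq (v3 (zi (\<Sum>i<m. d i)) (zi (\<Sum>i<N. d i)) (zi h))"
  have hW: "wt (N+p) (newL N s p m S cs) (newL N s p m A ca) (newQ N s p m Q cq) (emb N s p d a)
      = wt N S A Q d * ?G d ((\<Sum>i<s. d i) + (\<Sum>i\<in>{s..<s+p}. a i)) * tq ^ crossDA s p d a"
    if d: "\<forall>i\<ge>N. d i = 0" and aS: "a \<in> SplAll s p d" for d a
  proof -
    let ?e = "emb N s p d a"
    let ?V = "v3 (zi (\<Sum>i<m. d i)) (zi (\<Sum>i<N. d i)) (zi ((\<Sum>i<s. d i) + (\<Sum>i\<in>{s..<s+p}. a i)))"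
    have V: "\<And>x. linf (N+p) (Uv N s p m x) ?e = ?V x" by (rule Uv_lin[OF sp mN aS])
    have L: "linf (N+p) (newL N s p m S' c) ?e = linf N S' d + (\<Sum>x<3. c x * ?V x)" for S' c
    proof -
      have "linf (N+p) (newL N s p m S' c) ?e = linf (N+p) (\<lambda>i. S' (io N s i)) ?e + linf (N+p) (\<lambda>i. \<Sum>x<3. c x * Uv N s p m x i) ?e"
        unfolding newL_def by (rule lin_add)
      also have "linf (N+p) (\<lambda>i. S' (io N s i)) ?e = linf N S' d" by (rule pull_lin[OF sp aS])
      also have "linf (N+p) (\<lambda>i. \<Sum>x<3. c x * Uv N s p m x i) ?e = (\<Sum>x<3. c x * ?V x)"
        by (simp add: lin_comb V)
      finally show ?thesis .
    qed
    have Qe: "quadf (N+p) (newQ N s p m Q cq) ?e = quadf N Q d + (\<Sum>x<3. \<Sum>y<3. ?V x * cq x y * ?V y) + 2 * zi (crossDA s p d a)"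
    proof -
      have "quadf (N+p) (newQ N s p m Q cq) ?e = quadf (N+p) (\<lambda>i i'. Q (io N s i) (io N s i')) ?e
          + quadf (N+p) (\<lambda>i i'. \<Sum>x<3. \<Sum>y<3. cq x y * Uv N s p m x i * Uv N s p m y i') ?e + quadf (N+p) (CM N s p) ?e"
        unfolding newQ_def by (simp only: quad_add)
      also have "quadf (N+p) (\<lambda>i i'. Q (io N s i) (io N s i')) ?e = quadf N Q d" by (rule pull_quad[OF sp aS])
      also have "quadf (N+p) (\<lambda>i i'. \<Sum>x<3. \<Sum>y<3. cq x y * Uv N s p m x i * Uv N s p m y i') ?e
          = (\<Sum>x<3. \<Sum>y<3. ?V x * cq x y * ?V y)"
        by (simp only: quad_comb V)
      also have "quadf (N+p) (CM N s p) ?e = 2 * zi (crossDA s p d a)" by (rule cross_quad[OF sp aS])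
      finally show ?thesis .
    qed
    have qn: "- qv \<noteq> 0" using qv_nz by simp
    have tqc: "tq ^ crossDA s p d a = qv powi (2 * zi (crossDA s p d a))"
      by (metis power_mult power_int_of_nat of_nat_mult of_nat_numeral)
    show ?thesis
      unfolding wt_alt L Qe twf_def tqc
      by (simp only: powi_add3[OF qn] powi_add3[OF av_nz] powi_add3[OF qv_nz] ac_simps)
  qed
  show ?thesis by (rule split_lemma[OF sp hW])
qed


lemma qT: assumes "k \<le> h" "h \<le> j" shows "qbin j h * qbin h k / qbin j k = B (j-k) (h-k)"
proof -
  have e: "j - k - (h - k) = j - h" using assms by simp
  show ?thesis unfolding B_def qbin_def e using assms P_nz[of j] P_nz[of h] P_nz[of k] P_nz[of "j-h"] P_nz[of "h-k"] P_nz[of "j-k"]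
    by (simp add: field_simps)
qed

lemma qR: assumes "h \<le> k" "k \<le> j" shows "qbin j h * qbin (j-h) (k-h) / qbin j k = B k h"
proof -
  have e: "j - h - (k - h) = j - k" using assms by simp
  show ?thesis unfolding B_def qbin_def e using assms P_nz[of j] P_nz[of h] P_nz[of k] P_nz[of "j-h"] P_nz[of "k-h"] P_nz[of "j-k"]
    by (simp add: field_simps)
qed

lemma act_le: "d \<in> Dset N j \<Longrightarrow> m \<le> N \<Longrightarrow> (\<Sum>i<m. d i) \<le> j"
  unfolding Dset_def using sum_mono2[of "{..<N}" "{..<m}" d] by auto

lemma group_D:
  assumes mN: "m \<le> N"
  shows "(\<Sum>d\<in>Dset N j. f (\<Sum>i<m. d i) d) = (\<Sum>k\<in>{0..j}. \<Sum>d\<in>gset N m j k. f k d)"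
proof -
  have "(\<Sum>d\<in>Dset N j. f (\<Sum>i<m. d i) d) = (\<Sum>k\<in>{0..j}. \<Sum>d\<in>{d \<in> Dset N j. (\<Sum>i<m. d i) = k}. f (\<Sum>i<m. d i) d)"
    by (rule sum.group[symmetric]) (auto simp: finite_Dset act_le[OF _ mN])
  also have "\<dots> = (\<Sum>k\<in>{0..j}. \<Sum>d\<in>gset N m j k. f k d)"
  proof (rule sum.cong[OF refl])
    fix k
    have "{d \<in> Dset N j. (\<Sum>i<m. d i) = k} = gset N m j k" by (auto simp: Dset_def gset_def)
    thus "(\<Sum>d\<in>{d \<in> Dset N j. (\<Sum>i<m. d i) = k}. f (\<Sum>i<m. d i) d) = (\<Sum>d\<in>gset N m j k. f k d)"
      by (intro sum.cong) (auto simp: gset_def)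
  qed
  finally show ?thesis .
qed

lemma gqf_mult: "gqf N m W j k * x = (\<Sum>d\<in>gset N m j k. W d * (PP j / (\<Prod>i<N. PP (d i))) * x)"
  by (simp add: gqf_def sum_distrib_right)

lemma T_shape:
  assumes c: "\<And>k. c k = gqf (m+n) m W j k"
  shows "qbin j h * (if h \<le> j then (\<Sum>k\<in>{0..h}. (c k / qbin j k) * g k * qbin h k) else 0)
    = (\<Sum>d\<in>Dset (m+n) j. if (\<Sum>i<m. d i) \<le> h then W d * (PP j / (\<Prod>i<m+n. PP (d i))) * g (\<Sum>i<m. d i)
          * B (\<Sum>i\<in>{m..<m+n}. d i) (h - (\<Sum>i<m. d i)) else 0)"
proof -
  have mN: "m \<le> m + n" by simp
  have blk: "(\<Sum>i\<in>{m..<m+n}. d i) = j - (\<Sum>i<m. d i)" if "d \<in> Dset (m+n) j" for d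
  proof -
    have "(\<Sum>i<m+n. d i) = (\<Sum>i<m. d i) + (\<Sum>i\<in>{m..<m+n}. d i)"
      using sum.atLeastLessThan_concat[of 0 m "m+n" d] by (simp add: atLeast0LessThan)
    thus ?thesis using that by (simp add: Dset_def) arith
  qed
  let ?R = "\<lambda>k d. if k \<le> h then W d * (PP j / (\<Prod>i<m+n. PP (d i))) * g k * B (j - k) (h - k) else 0"
  have "(\<Sum>d\<in>Dset (m+n) j. if (\<Sum>i<m. d i) \<le> h then W d * (PP j / (\<Prod>i<m+n. PP (d i))) * g (\<Sum>i<m. d i)
          * B (\<Sum>i\<in>{m..<m+n}. d i) (h - (\<Sum>i<m. d i)) else 0) = (\<Sum>d\<in>Dset (m+n) j. ?R (\<Sum>i<m. d i) d)"
    by (intro sum.cong refl) (simp add: blk)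
  also have "\<dots> = (\<Sum>k\<in>{0..j}. \<Sum>d\<in>gset (m+n) m j k. ?R k d)" by (rule group_D[OF mN])
  finally have R: "(\<Sum>d\<in>Dset (m+n) j. if (\<Sum>i<m. d i) \<le> h then W d * (PP j / (\<Prod>i<m+n. PP (d i))) * g (\<Sum>i<m. d i)
          * B (\<Sum>i\<in>{m..<m+n}. d i) (h - (\<Sum>i<m. d i)) else 0) = (\<Sum>k\<in>{0..j}. \<Sum>d\<in>gset (m+n) m j k. ?R k d)" .
  show ?thesis
  proof (cases "h \<le> j")
    case True
    have "qbin j h * (if h \<le> j then (\<Sum>k\<in>{0..h}. (c k / qbin j k) * g k * qbin h k) else 0)
       = (\<Sum>k\<in>{0..h}. \<Sum>d\<in>gset (m+n) m j k. ?R k d)"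
      unfolding if_P[OF True] sum_distrib_left
    proof (rule sum.cong[OF refl])
      fix k assume k: "k \<in> {0..h}"
      have "qbin j h * (c k / qbin j k * g k * qbin h k) = c k * (g k * (qbin j h * qbin h k / qbin j k))"
        by (simp add: field_simps)
      also have "\<dots> = c k * (g k * B (j-k) (h-k))" using qT[of k h j] k True by simp
      also have "\<dots> = (\<Sum>d\<in>gset (m+n) m j k. ?R k d)" unfolding c gqf_mult using k by (simp add: ac_simps)
      finally show "qbin j h * (c k / qbin j k * g k * qbin h k) = (\<Sum>d\<in>gset (m+n) m j k. ?R k d)" .
    qed
    also have "\<dots> = (\<Sum>k\<in>{0..j}. \<Sum>d\<in>gset (m+n) m j k. ?R k d)"
      by (rule sum.mono_neutral_left) (use True in auto)
    finally show ?thesis using R by simp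
  next
    case False
    have "(\<Sum>k\<in>{0..j}. \<Sum>d\<in>gset (m+n) m j k. ?R k d) = 0"
      by (intro sum.neutral ballI) (use False in \<open>auto simp: B_def\<close>)
    thus ?thesis using R False by simp
  qed
qed

lemma R_shape:
  assumes c: "\<And>k. c k = gqf (m+n) m W j k"
  shows "qbin j h * (if h \<le> j then (\<Sum>k\<in>{h..j}. (c k / qbin j k) * g k * qbin (j-h) (k-h)) else 0)
    = (\<Sum>d\<in>Dset (m+n) j. W d * (PP j / (\<Prod>i<m+n. PP (d i))) * g (\<Sum>i<m. d i) * B (\<Sum>i<m. d i) h)"
proof -
  have mN: "m \<le> m + n" by simp
  let ?R = "\<lambda>k d. W d * (PP j / (\<Prod>i<m+n. PP (d i))) * g k * B k h"
  have R: "(\<Sum>d\<in>Dset (m+n) j. W d * (PP j / (\<Prod>i<m+n. PP (d i))) * g (\<Sum>i<m. d i) * B (\<Sum>i<m. d i) h)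
     = (\<Sum>k\<in>{0..j}. \<Sum>d\<in>gset (m+n) m j k. ?R k d)" by (rule group_D[OF mN])
  show ?thesis
  proof (cases "h \<le> j")
    case True
    have "qbin j h * (if h \<le> j then (\<Sum>k\<in>{h..j}. (c k / qbin j k) * g k * qbin (j-h) (k-h)) else 0)
       = (\<Sum>k\<in>{h..j}. \<Sum>d\<in>gset (m+n) m j k. ?R k d)"
      unfolding if_P[OF True] sum_distrib_left
    proof (rule sum.cong[OF refl])
      fix k assume k: "k \<in> {h..j}"
      have "qbin j h * (c k / qbin j k * g k * qbin (j-h) (k-h)) = c k * (g k * (qbin j h * qbin (j-h) (k-h) / qbin j k))"
        by (simp add: field_simps)
      also have "\<dots> = c k * (g k * B k h)" using qR[of h k j] k by simp
      also have "\<dots> = (\<Sum>d\<in>gset (m+n) m j k. ?R k d)" unfolding c gqf_mult by (simp add: ac_simps)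
      finally show "qbin j h * (c k / qbin j k * g k * qbin (j-h) (k-h)) = (\<Sum>d\<in>gset (m+n) m j k. ?R k d)" .
    qed
    also have "\<dots> = (\<Sum>k\<in>{0..j}. \<Sum>d\<in>gset (m+n) m j k. ?R k d)"
      by (rule sum.mono_neutral_left) (auto simp: B_def)
    finally show ?thesis using R by simp
  next
    case False
    have "(\<Sum>k\<in>{0..j}. \<Sum>d\<in>gset (m+n) m j k. ?R k d) = 0"
      by (intro sum.neutral ballI) (use False in \<open>auto simp: B_def\<close>)
    thus ?thesis using R False by simp
  qed
qed


definition m3 :: "int \<Rightarrow> int \<Rightarrow> int \<Rightarrow> int \<Rightarrow> int \<Rightarrow> int \<Rightarrow> nat \<Rightarrow> nat \<Rightarrow> int" where
  "m3 kk jj hh kj kh jh x y = (if x = 0 \<and> y = 0 then kk else if x = 1 \<and> y = 1 then jj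
      else if x \<ge> 2 \<and> y \<ge> 2 then hh else if (x = 0 \<and> y = 1) \<or> (x = 1 \<and> y = 0) then kj
      else if (x = 0 \<and> y \<ge> 2) \<or> (x \<ge> 2 \<and> y = 0) then kh else jh)"

lemma m3_sym: "\<forall>x y. m3 kk jj hh kj kh jh x y = m3 kk jj hh kj kh jh y x"
  by (auto simp: m3_def)

lemma sum3: "(\<Sum>x<(3::nat). f x) = f 0 + f 1 + (f 2 :: int)"
  by (simp add: eval_nat_numeral)

lemma twf_eval: "twf (v3 s1 s2 s3) (v3 a1 a2 a3) (m3 kk jj hh kj kh jh) (v3 k j h)
   = (- qv) powi (s1*k + s2*j + s3*h) * av powi (a1*k + a2*j + a3*h)
     * qv powi (kk*k^2 + jj*j^2 + hh*h^2 + 2*kj*k*j + 2*kh*k*h + 2*jh*j*h)"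
proof -
  have "(\<Sum>x<3. \<Sum>y<3. v3 k j h x * m3 kk jj hh kj kh jh x y * v3 k j h y) = kk*k^2 + jj*j^2 + hh*h^2 + 2*kj*k*j + 2*kh*k*h + 2*jh*j*h"
    by (simp add: sum3 v3_def m3_def power2_eq_square algebra_simps)
  moreover have "(\<Sum>x<3. v3 s1 s2 s3 x * v3 k j h x) = s1*k + s2*j + s3*h" by (simp add: sum3 v3_def)
  moreover have "(\<Sum>x<3. v3 a1 a2 a3 x * v3 k j h x) = a1*k + a2*j + a3*h" by (simp add: sum3 v3_def)
  ultimately show ?thesis by (simp add: twf_def)
qed



lemma T_case:
  assumes symQ: "\<forall>i<m+n. \<forall>i'<m+n. Q i i' = Q i' i"
    and symc: "\<forall>x y. cq x y = cq y x"
    and LHS: "\<And>j h. Gout Y j h = qbin j h * (if h \<le> j then (\<Sum>k\<in>{0..h}. (quiver_form m n S A Q X X j k / qbin j k) * g j k h * qbin h k) else 0)"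
    and others: "\<And>X' j h. X' \<noteq> Y \<Longrightarrow> Gout X' j h = 0"
    and gtw: "\<And>j k h. twf cs ca cq (v3 (zi k) (zi j) (zi h)) = g j k h"
  shows "\<exists>S' A' Q'. (\<forall>i<(m+n)+n. \<forall>i'<(m+n)+n. Q' i i' = Q' i' i) \<and> Gout = quiver_form (m+n) n S' A' Q' Y"
proof (intro exI conjI)
  let ?N = "m+n"
  have sp: "m + n \<le> ?N" by simp
  have mN: "m \<le> ?N" by simp
  show "\<forall>i<(m+n)+n. \<forall>i'<(m+n)+n. newQ ?N m n m Q cq i i' = newQ ?N m n m Q cq i' i"
    using newQ_sym[OF symQ symc sp] by blast
  show "Gout = quiver_form (m+n) n (newL ?N m n m S cs) (newL ?N m n m A ca) (newQ ?N m n m Q cq) Y"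
  proof (intro ext)
    fix X' j h
    show "Gout X' j h = quiver_form (m+n) n (newL ?N m n m S cs) (newL ?N m n m A ca) (newQ ?N m n m Q cq) Y X' j h"
    proof (cases "X' = Y")
      case False thus ?thesis using others by (simp add: qf_eq)
    next
      case True
      have c: "\<And>k. quiver_form m n S A Q X X j k = gqf (m+n) m (wt (m+n) S A Q) j k" by (simp add: qf_eq)
      have "Gout X' j h = (\<Sum>d\<in>Dset (m+n) j. if (\<Sum>i<m. d i) \<le> h then wt (m+n) S A Q d * (PP j / (\<Prod>i<m+n. PP (d i))) * g j (\<Sum>i<m. d i) h
          * B (\<Sum>i\<in>{m..<m+n}. d i) (h - (\<Sum>i<m. d i)) else 0)"
        unfolding True LHS by (rule T_shape[OF c])
      also have "\<dots> = gqf (?N+n) (m+n) (wt (?N+n) (newL ?N m n m S cs) (newL ?N m n m A ca) (newQ ?N m n m Q cq)) j h"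
        unfolding qf_split[OF sp mN]
        by (intro sum.cong refl) (auto simp: Dset_def gtw simp del: of_nat_sum)
      finally show ?thesis using True by (simp add: qf_eq)
    qed
  qed
qed

lemma R_case:
  assumes symQ: "\<forall>i<m+n. \<forall>i'<m+n. Q i i' = Q i' i"
    and symc: "\<forall>x y. cq x y = cq y x"
    and LHS: "\<And>j h. Gout Y j h = qbin j h * (if h \<le> j then (\<Sum>k\<in>{h..j}. (quiver_form m n S A Q X X j k / qbin j k) * g j k h * qbin (j-h) (k-h)) else 0)"
    and others: "\<And>X' j h. X' \<noteq> Y \<Longrightarrow> Gout X' j h = 0"
    and gtw: "\<And>j k h. twf cs ca cq (v3 (zi k) (zi j) (zi h)) = g j k h"
  shows "\<exists>S' A' Q'. (\<forall>i<m+(n+m). \<forall>i'<m+(n+m). Q' i i' = Q' i' i) \<and> Gout = quiver_form m (n+m) S' A' Q' Y"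
proof (intro exI conjI)
  let ?N = "m+n"
  have sp: "0 + m \<le> ?N" by simp
  have mN: "m \<le> ?N" by simp
  have NN: "m + (n + m) = ?N + m" by simp
  show "\<forall>i<m+(n+m). \<forall>i'<m+(n+m). newQ ?N 0 m m Q cq i i' = newQ ?N 0 m m Q cq i' i"
    unfolding NN using newQ_sym[OF symQ symc sp] by blast
  show "Gout = quiver_form m (n+m) (newL ?N 0 m m S cs) (newL ?N 0 m m A ca) (newQ ?N 0 m m Q cq) Y"
  proof (intro ext)
    fix X' j h
    show "Gout X' j h = quiver_form m (n+m) (newL ?N 0 m m S cs) (newL ?N 0 m m A ca) (newQ ?N 0 m m Q cq) Y X' j h"
    proof (cases "X' = Y")
      case False thus ?thesis using others by (simp add: qf_eq)
    next
      case True
      have c: "\<And>k. quiver_form m n S A Q X X j k = gqf (m+n) m (wt (m+n) S A Q) j k" by (simp add: qf_eq)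
      have "Gout X' j h = (\<Sum>d\<in>Dset (m+n) j. wt (m+n) S A Q d * (PP j / (\<Prod>i<m+n. PP (d i))) * g j (\<Sum>i<m. d i) h * B (\<Sum>i<m. d i) h)"
        unfolding True LHS by (rule R_shape[OF c])
      also have "\<dots> = gqf (?N+m) (0+m) (wt (?N+m) (newL ?N 0 m m S cs) (newL ?N 0 m m A ca) (newQ ?N 0 m m Q cq)) j h"
        unfolding qf_split[OF sp mN]
        by (intro sum.cong refl) (auto simp: Dset_def gtw atLeast0LessThan simp del: of_nat_sum)
      finally show ?thesis using True by (simp add: qf_eq NN)
    qed
  qed
qed


abbreviation "QF m n S A Q X \<equiv> quiver_form m n S A Q X"
abbreviation "SYM N Q \<equiv> (\<forall>i<N. \<forall>i'<N. Q i i' = Q i' i)"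

lemma T_UP: assumes "SYM (m+n) Q"
  shows "\<exists>S' A' Q'. SYM ((m+n)+n) Q' \<and> Tt (QF m n S A Q UP) = QF (m+n) n S' A' Q' UP"
proof (rule T_case[OF assms m3_sym, where g = "\<lambda>j k h. (- qv) powi (zi h - zi j) * qv powi (zi k ^ 2)"])
  show "\<And>j h. Tt (QF m n S A Q UP) UP j h = qbin j h * (if h \<le> j then (\<Sum>k\<in>{0..h}. (QF m n S A Q UP UP j k / qbin j k) * ((- qv) powi (zi h - zi j) * qv powi (zi k ^ 2)) * qbin h k) else 0)"
    by (simp add: Tt_def rho_def rho_inv_def Ttw_def mult.assoc)
  show "\<And>X' j h. X' \<noteq> UP \<Longrightarrow> Tt (QF m n S A Q UP) X' j h = 0"
    by (simp add: Tt_def rho_def rho_inv_def Ttw_def quiver_form_def split: orient.split)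
  show "\<And>j k h. twf (v3 0 (-1) 1) (v3 0 0 0) (m3 1 0 0 0 0 0) (v3 (zi k) (zi j) (zi h)) = (- qv) powi (zi h - zi j) * qv powi (zi k ^ 2)"
    by (simp add: twf_eval)
qed

lemma T_OP: assumes "SYM (m+n) Q"
  shows "\<exists>S' A' Q'. SYM ((m+n)+n) Q' \<and> Tt (QF m n S A Q OP) = QF (m+n) n S' A' Q' RI"
proof (rule T_case[OF assms m3_sym, where g = "\<lambda>j k h. (- qv) powi (zi h) * av powi (zi k) * qv powi (zi k ^ 2 - 2 * zi j * zi k)"])
  show "\<And>j h. Tt (QF m n S A Q OP) RI j h = qbin j h * (if h \<le> j then (\<Sum>k\<in>{0..h}. (QF m n S A Q OP OP j k / qbin j k) * ((- qv) powi (zi h) * av powi (zi k) * qv powi (zi k ^ 2 - 2 * zi j * zi k)) * qbin h k) else 0)"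
    by (simp add: Tt_def rho_def rho_inv_def Ttw_def mult.assoc)
  show "\<And>X' j h. X' \<noteq> RI \<Longrightarrow> Tt (QF m n S A Q OP) X' j h = 0"
    by (simp add: Tt_def rho_def rho_inv_def Ttw_def quiver_form_def split: orient.split)
  show "\<And>j k h. twf (v3 0 0 1) (v3 1 0 0) (m3 1 0 0 (-1) 0 0) (v3 (zi k) (zi j) (zi h)) = (- qv) powi (zi h) * av powi (zi k) * qv powi (zi k ^ 2 - 2 * zi j * zi k)"
    by (simp add: twf_eval algebra_simps)
qed

lemma T_RI: assumes "SYM (m+n) Q"
  shows "\<exists>S' A' Q'. SYM ((m+n)+n) Q' \<and> Tt (QF m n S A Q RI) = QF (m+n) n S' A' Q' OP"
proof (rule T_case[OF assms m3_sym, where g = "\<lambda>j k h. (- qv) powi (zi h) * av powi (zi h) * qv powi (zi k ^ 2 - 2 * zi j * zi h)"])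
  show "\<And>j h. Tt (QF m n S A Q RI) OP j h = qbin j h * (if h \<le> j then (\<Sum>k\<in>{0..h}. (QF m n S A Q RI RI j k / qbin j k) * ((- qv) powi (zi h) * av powi (zi h) * qv powi (zi k ^ 2 - 2 * zi j * zi h)) * qbin h k) else 0)"
    by (simp add: Tt_def rho_def rho_inv_def Ttw_def mult.assoc)
  show "\<And>X' j h. X' \<noteq> OP \<Longrightarrow> Tt (QF m n S A Q RI) X' j h = 0"
    by (simp add: Tt_def rho_def rho_inv_def Ttw_def quiver_form_def split: orient.split)
  show "\<And>j k h. twf (v3 0 0 1) (v3 0 0 1) (m3 1 0 0 0 0 (-1)) (v3 (zi k) (zi j) (zi h)) = (- qv) powi (zi h) * av powi (zi h) * qv powi (zi k ^ 2 - 2 * zi j * zi h)"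
    by (simp add: twf_eval algebra_simps)
qed

lemma R_UP: assumes "SYM (m+n) Q"
  shows "\<exists>S' A' Q'. SYM (m+(n+m)) Q' \<and> Rt (QF m n S A Q UP) = QF m (n+m) S' A' Q' OP"
proof (rule R_case[OF assms m3_sym, where g = "\<lambda>j k h. (- qv) powi (zi h - zi j) * av powi (zi h - zi j) * qv powi (- 2 * zi k * zi h + zi k ^ 2 + zi j ^ 2)"])
  show "\<And>j h. Rt (QF m n S A Q UP) OP j h = qbin j h * (if h \<le> j then (\<Sum>k\<in>{h..j}. (QF m n S A Q UP UP j k / qbin j k) * ((- qv) powi (zi h - zi j) * av powi (zi h - zi j) * qv powi (- 2 * zi k * zi h + zi k ^ 2 + zi j ^ 2)) * qbin (j-h) (k-h)) else 0)"
    by (simp add: Rt_def rho_def rho_inv_def Rtw_def mult.assoc)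
  show "\<And>X' j h. X' \<noteq> OP \<Longrightarrow> Rt (QF m n S A Q UP) X' j h = 0"
    by (simp add: Rt_def rho_def rho_inv_def Rtw_def quiver_form_def split: orient.split)
  show "\<And>j k h. twf (v3 0 (-1) 1) (v3 0 (-1) 1) (m3 1 1 0 0 (-1) 0) (v3 (zi k) (zi j) (zi h)) = (- qv) powi (zi h - zi j) * av powi (zi h - zi j) * qv powi (- 2 * zi k * zi h + zi k ^ 2 + zi j ^ 2)"
    by (simp add: twf_eval algebra_simps)
qed

lemma R_OP: assumes "SYM (m+n) Q"
  shows "\<exists>S' A' Q'. SYM (m+(n+m)) Q' \<and> Rt (QF m n S A Q OP) = QF m (n+m) S' A' Q' UP"
proof (rule R_case[OF assms m3_sym, where g = "\<lambda>j k h. (- qv) powi (zi h - zi j) * av powi (zi k - zi j) * qv powi (2 * zi h * (zi j - zi k) + (zi k - zi j) ^ 2)"])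
  show "\<And>j h. Rt (QF m n S A Q OP) UP j h = qbin j h * (if h \<le> j then (\<Sum>k\<in>{h..j}. (QF m n S A Q OP OP j k / qbin j k) * ((- qv) powi (zi h - zi j) * av powi (zi k - zi j) * qv powi (2 * zi h * (zi j - zi k) + (zi k - zi j) ^ 2)) * qbin (j-h) (k-h)) else 0)"
    by (simp add: Rt_def rho_def rho_inv_def Rtw_def mult.assoc)
  show "\<And>X' j h. X' \<noteq> UP \<Longrightarrow> Rt (QF m n S A Q OP) X' j h = 0"
    by (simp add: Rt_def rho_def rho_inv_def Rtw_def quiver_form_def split: orient.split)
  show "\<And>j k h. twf (v3 0 (-1) 1) (v3 1 (-1) 0) (m3 1 1 0 (-1) (-1) 1) (v3 (zi k) (zi j) (zi h)) = (- qv) powi (zi h - zi j) * av powi (zi k - zi j) * qv powi (2 * zi h * (zi j - zi k) + (zi k - zi j) ^ 2)"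
    by (simp add: twf_eval algebra_simps power2_eq_square)
qed

lemma R_RI: assumes "SYM (m+n) Q"
  shows "\<exists>S' A' Q'. SYM (m+(n+m)) Q' \<and> Rt (QF m n S A Q RI) = QF m (n+m) S' A' Q' RI"
proof (rule R_case[OF assms m3_sym, where g = "\<lambda>j k h. (- qv) powi (zi h) * qv powi (zi h * (2 * zi j - 2 * zi k) + zi k ^ 2 - zi j ^ 2)"])
  show "\<And>j h. Rt (QF m n S A Q RI) RI j h = qbin j h * (if h \<le> j then (\<Sum>k\<in>{h..j}. (QF m n S A Q RI RI j k / qbin j k) * ((- qv) powi (zi h) * qv powi (zi h * (2 * zi j - 2 * zi k) + zi k ^ 2 - zi j ^ 2)) * qbin (j-h) (k-h)) else 0)"
    by (simp add: Rt_def rho_def rho_inv_def Rtw_def mult.assoc)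
  show "\<And>X' j h. X' \<noteq> RI \<Longrightarrow> Rt (QF m n S A Q RI) X' j h = 0"
    by (simp add: Rt_def rho_def rho_inv_def Rtw_def quiver_form_def split: orient.split)
  show "\<And>j k h. twf (v3 0 0 1) (v3 0 0 0) (m3 1 (-1) 0 0 (-1) 1) (v3 (zi k) (zi j) (zi h)) = (- qv) powi (zi h) * qv powi (zi h * (2 * zi j - 2 * zi k) + zi k ^ 2 - zi j ^ 2)"
    by (simp add: twf_eval algebra_simps power2_eq_square)
qed


lemma F0_qf: "F0 = QF 0 1 (\<lambda>_. 0) (\<lambda>_. 0) (\<lambda>_ _. 0) UP"
proof (intro ext)
  fix X j k
  have gs: "gset (Suc 0) 0 j k = (if k = 0 then {\<lambda>i. if i = 0 then j else 0} else {})"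
    by (auto simp: gset_def fun_eq_iff)
  show "F0 X j k = QF 0 1 (\<lambda>_. 0) (\<lambda>_. 0) (\<lambda>_ _. 0) UP X j k"
    using P_nz[of j] by (simp add: qf_eq gqf_def gs F0_def wt_def)
qed

lemma ex_helper: "SYM (m'+n') Q' \<Longrightarrow> G = QF m' n' S' A' Q' Y \<Longrightarrow> \<exists>m n S A Q X. SYM (m+n) Q \<and> G = QF m n S A Q X"
  by blast

theorem mainTheorem6:
  fixes w :: "letter list"
  shows "\<exists>m n (S :: nat \<Rightarrow> int) (A :: nat \<Rightarrow> int) (Q :: nat \<Rightarrow> nat \<Rightarrow> int) X.
           (\<forall>i<m+n. \<forall>i'<m+n. Q i i' = Q i' i) \<and>
           word_op w F0 = quiver_form m n S A Q X"
proof (induction w)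
  case Nil
  show ?case unfolding word_op_def using F0_qf by (intro exI[of _ 0] exI[of _ 1]) auto
next
  case (Cons l w)
  then obtain m n S A Q X where sym: "SYM (m+n) Q" and e: "word_op w F0 = QF m n S A Q X" by blast
  have wo: "word_op (l # w) F0 = letter_op l (QF m n S A Q X)" using e by (simp add: word_op_def)
  show ?case
  proof (cases l)
    case LT
    show ?thesis
    proof (cases X)
      case UP then obtain S' A' Q' where "SYM ((m+n)+n) Q'" "Tt (QF m n S A Q UP) = QF (m+n) n S' A' Q' UP" using T_UP[OF sym] by blast
      thus ?thesis using wo LT UP by (intro ex_helper) (simp_all add: letter_op_def)
    next
      case OP then obtain S' A' Q' where "SYM ((m+n)+n) Q'" "Tt (QF m n S A Q OP) = QF (m+n) n S' A' Q' RI" using T_OP[OF sym] by blast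
      thus ?thesis using wo LT OP by (intro ex_helper) (simp_all add: letter_op_def)
    next
      case RI then obtain S' A' Q' where "SYM ((m+n)+n) Q'" "Tt (QF m n S A Q RI) = QF (m+n) n S' A' Q' OP" using T_RI[OF sym] by blast
      thus ?thesis using wo LT RI by (intro ex_helper) (simp_all add: letter_op_def)
    qed
  next
    case LR
    show ?thesis
    proof (cases X)
      case UP then obtain S' A' Q' where "SYM (m+(n+m)) Q'" "Rt (QF m n S A Q UP) = QF m (n+m) S' A' Q' OP" using R_UP[OF sym] by blast
      thus ?thesis using wo LR UP by (intro ex_helper) (simp_all add: letter_op_def)
    next
      case OP then obtain S' A' Q' where "SYM (m+(n+m)) Q'" "Rt (QF m n S A Q OP) = QF m (n+m) S' A' Q' UP" using R_OP[OF sym] by blast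
      thus ?thesis using wo LR OP by (intro ex_helper) (simp_all add: letter_op_def)
    next
      case RI then obtain S' A' Q' where "SYM (m+(n+m)) Q'" "Rt (QF m n S A Q RI) = QF m (n+m) S' A' Q' RI" using R_RI[OF sym] by blast
      thus ?thesis using wo LR RI by (intro ex_helper) (simp_all add: letter_op_def)
    qed
  qed
qed


end
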